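(* Let $G\subseteq\mathrm{O}_n(\mathbb{R})$ be a finite group, let $H$ be a subgroup of $G$, and let $\phi:\mathbb{R}[\underline{X}]^G\to\mathbb{R}$ be a ring homomorphism such that $\phi(\langle df,df\rangle)\ge0$ for all $f\in\mathbb{R}[\underline{X}]^G$. Suppose $\phi$ extends to a ring homomorphism $\phi_H:\mathbb{R}[\underline{X}]^H\to\mathbb{R}$. Then $\phi_H(\langle df,df\rangle)\ge0$ for all $f\in\mathbb{R}[\underline{X}]^H$.
   Context: $\mathbb{R}[\underline{X}]=\mathbb{R}[X_1,\dots,X_n]$, and $\mathbb{R}[\underline{X}]^K$ denotes the ring of polynomials invariant under a subgroup $K$ acting by $h^\sigma(x)=h(\sigma^{-1}x)$. For a polynomial $p$, $\langle dp,dp\rangle=\sum_{j=1}^n\left(\frac{\partial p}{\partial X_j}\right)^2$; for $K$-invariant $p$ this is $K$-invariant. *)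

theory Defs
  imports "HOL-Analysis.Analysis"
begin

text \<open>Polynomials in X_1..X_n over the reals, represented (faithfully, since R is an infinite
field) as polynomial functions on R^n, with the index type 'n of cardinality n.\<close>

inductive_set poly_funs :: "(real^'n \<Rightarrow> real) set" where
  const: "(\<lambda>x. c) \<in> poly_funs"
| coord: "(\<lambda>x. x $ i) \<in> poly_funs"
| add: "f \<in> poly_funs \<Longrightarrow> g \<in> poly_funs \<Longrightarrow> (\<lambda>x. f x + g x) \<in> poly_funs"
| mult: "f \<in> poly_funs \<Longrightarrow> g \<in> poly_funs \<Longrightarrow> (\<lambda>x. f x * g x) \<in> poly_funs"

definition finite_orth_group :: "(real^'n^'n) set \<Rightarrow> bool" where
  "finite_orth_group G \<longleftrightarrow> finite G \<and> (\<forall>A\<in>G. orthogonal_matrix A) \<and> mat 1 \<in> G \<and>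
     (\<forall>A\<in>G. \<forall>B\<in>G. A ** B \<in> G) \<and> (\<forall>A\<in>G. matrix_inv A \<in> G)"

definition matrix_subgroup :: "(real^'n^'n) set \<Rightarrow> (real^'n^'n) set \<Rightarrow> bool" where
  "matrix_subgroup H G \<longleftrightarrow> H \<subseteq> G \<and> mat 1 \<in> H \<and>
     (\<forall>A\<in>H. \<forall>B\<in>H. A ** B \<in> H) \<and> (\<forall>A\<in>H. matrix_inv A \<in> H)"

definition inv_polys :: "(real^'n^'n) set \<Rightarrow> (real^'n \<Rightarrow> real) set" where
  "inv_polys K = {f \<in> poly_funs. \<forall>\<sigma>\<in>K. \<forall>x. f (matrix_inv \<sigma> *v x) = f x}"

definition ring_hom_on :: "(real^'n \<Rightarrow> real) set \<Rightarrow> ((real^'n \<Rightarrow> real) \<Rightarrow> real) \<Rightarrow> bool" where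
  "ring_hom_on S \<phi> \<longleftrightarrow> \<phi> (\<lambda>x. 1) = 1 \<and>
     (\<forall>f\<in>S. \<forall>g\<in>S. \<phi> (\<lambda>x. f x + g x) = \<phi> f + \<phi> g) \<and>
     (\<forall>f\<in>S. \<forall>g\<in>S. \<phi> (\<lambda>x. f x * g x) = \<phi> f * \<phi> g)"

definition partial_deriv :: "(real^'n \<Rightarrow> real) \<Rightarrow> 'n \<Rightarrow> real^'n \<Rightarrow> real" where
  "partial_deriv f j x = deriv (\<lambda>t. f (x + t *\<^sub>R axis j 1)) 0"

definition dd :: "(real^'n \<Rightarrow> real) \<Rightarrow> real^'n \<Rightarrow> real" where
  "dd p = (\<lambda>x. \<Sum>j\<in>UNIV. (partial_deriv p j x)^2)"

end

theory Submission
  imports Defs "HOL-Computational_Algebra.Fundamental_Theorem_Algebra" "HOL-Library.FuncSet"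
begin

section \<open>Orthogonal groups\<close>

lemma orth_matrix_inv:
  assumes "orthogonal_matrix (s::real^'n^'n)"
  shows "matrix_inv s = transpose s"
proof -
  have e: "s ** transpose s = mat 1" "transpose s ** s = mat 1"
    using assms by (auto simp: orthogonal_matrix_def)
  have "s ** matrix_inv s = mat 1 \<and> matrix_inv s ** s = mat 1"
    unfolding matrix_inv_def by (rule someI[where x="transpose s"]) (simp add: e)
  then have "transpose s ** (s ** matrix_inv s) = transpose s" by simp
  then show ?thesis by (simp add: matrix_mul_assoc e)
qed

definition ogrp :: "(real^'n^'n) set \<Rightarrow> bool" where
  "ogrp K \<longleftrightarrow> finite K \<and> (\<forall>A\<in>K. orthogonal_matrix A) \<and> mat 1 \<in> K \<and>
     (\<forall>A\<in>K. \<forall>B\<in>K. A ** B \<in> K) \<and> (\<forall>A\<in>K. transpose A \<in> K)"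

lemma ogrp_G: "finite_orth_group G \<Longrightarrow> ogrp G"
  unfolding finite_orth_group_def ogrp_def by (metis orth_matrix_inv)

lemma ogrp_H: "finite_orth_group G \<Longrightarrow> matrix_subgroup H G \<Longrightarrow> ogrp H"
  unfolding finite_orth_group_def ogrp_def matrix_subgroup_def
  by (metis finite_subset orth_matrix_inv subsetD)

lemma ogrp_orth: "ogrp K \<Longrightarrow> A \<in> K \<Longrightarrow> orthogonal_matrix A"
  by (simp add: ogrp_def)
lemma ogrp_one: "ogrp K \<Longrightarrow> mat 1 \<in> K"
  by (simp add: ogrp_def)
lemma ogrp_mult: "ogrp K \<Longrightarrow> A \<in> K \<Longrightarrow> B \<in> K \<Longrightarrow> A ** B \<in> K"
  by (simp add: ogrp_def)
lemma ogrp_tr: "ogrp K \<Longrightarrow> A \<in> K \<Longrightarrow> transpose A \<in> K"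
  by (simp add: ogrp_def)
lemma ogrp_fin: "ogrp K \<Longrightarrow> finite K"
  by (simp add: ogrp_def)

lemma orth_tr_mul: "orthogonal_matrix (A::real^'n^'n) \<Longrightarrow> transpose A ** A = mat 1"
  by (simp add: orthogonal_matrix_def)
lemma orth_mul_tr: "orthogonal_matrix (A::real^'n^'n) \<Longrightarrow> A ** transpose A = mat 1"
  by (simp add: orthogonal_matrix_def)

lemma ogrp_bij:
  assumes "ogrp K" "s \<in> K"
  shows "bij_betw (\<lambda>g. g ** s) K K"
proof (rule bij_betwI[where g="\<lambda>g. g ** transpose s"])
  show "(\<lambda>g. g ** s) \<in> K \<rightarrow> K" using assms ogrp_mult by blast
  show "(\<lambda>g. g ** transpose s) \<in> K \<rightarrow> K" using assms ogrp_mult ogrp_tr by blast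
  have o: "orthogonal_matrix s" using assms ogrp_orth by blast
  show "x ** s ** transpose s = x" for x
    by (metis matrix_mul_assoc matrix_mul_rid orth_mul_tr[OF o])
  show "y ** transpose s ** s = y" for y
    by (metis matrix_mul_assoc matrix_mul_rid orth_tr_mul[OF o])
qed

lemma inv_polys_alt:
  assumes "ogrp K"
  shows "inv_polys K = {f \<in> poly_funs. \<forall>\<sigma>\<in>K. \<forall>x. f (\<sigma> *v x) = f x}"
proof -
  have "(\<forall>\<sigma>\<in>K. \<forall>x. f (matrix_inv \<sigma> *v x) = f x) \<longleftrightarrow> (\<forall>\<sigma>\<in>K. \<forall>x. f (\<sigma> *v x) = f x)" for f
  proof
    assume h: "\<forall>\<sigma>\<in>K. \<forall>x. f (matrix_inv \<sigma> *v x) = f x"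
    show "\<forall>\<sigma>\<in>K. \<forall>x. f (\<sigma> *v x) = f x"
    proof (intro ballI allI)
      fix \<sigma> x assume s: "\<sigma> \<in> K"
      have "transpose \<sigma> \<in> K" using assms s ogrp_tr by blast
      moreover have "matrix_inv (transpose \<sigma>) = \<sigma>"
        using assms s ogrp_orth orth_matrix_inv orthogonal_matrix_transpose by fastforce
      ultimately show "f (\<sigma> *v x) = f x" using h by metis
    qed
  next
    assume h: "\<forall>\<sigma>\<in>K. \<forall>x. f (\<sigma> *v x) = f x"
    show "\<forall>\<sigma>\<in>K. \<forall>x. f (matrix_inv \<sigma> *v x) = f x"
      using h assms ogrp_tr ogrp_orth orth_matrix_inv by metis
  qed
  then show ?thesis unfolding inv_polys_def by blast
qed

lemma inv_polysD: "ogrp K \<Longrightarrow> f \<in> inv_polys K \<Longrightarrow> \<sigma> \<in> K \<Longrightarrow> f (\<sigma> *v x) = f x"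
  using inv_polys_alt by blast
lemma inv_polys_pf: "f \<in> inv_polys K \<Longrightarrow> f \<in> poly_funs"
  by (simp add: inv_polys_def)
lemma inv_polysI: "ogrp K \<Longrightarrow> f \<in> poly_funs \<Longrightarrow> (\<And>\<sigma> x. \<sigma> \<in> K \<Longrightarrow> f (\<sigma> *v x) = f x) \<Longrightarrow> f \<in> inv_polys K"
  using inv_polys_alt by blast

section \<open>Real polynomial functions\<close>

lemma pf_const: "(\<lambda>x. c) \<in> poly_funs" by (rule poly_funs.const)
lemma pf_coord: "(\<lambda>x. x $ i) \<in> poly_funs" by (rule poly_funs.coord)
lemma pf_add: "f \<in> poly_funs \<Longrightarrow> g \<in> poly_funs \<Longrightarrow> (\<lambda>x. f x + g x) \<in> poly_funs"
  by (rule poly_funs.add)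
lemma pf_mult: "f \<in> poly_funs \<Longrightarrow> g \<in> poly_funs \<Longrightarrow> (\<lambda>x. f x * g x) \<in> poly_funs"
  by (rule poly_funs.mult)
lemma pf_neg: "f \<in> poly_funs \<Longrightarrow> (\<lambda>x. - f x) \<in> poly_funs"
  using pf_mult[OF pf_const[of "-1"]] by simp
lemma pf_diff: "f \<in> poly_funs \<Longrightarrow> g \<in> poly_funs \<Longrightarrow> (\<lambda>x. f x - g x) \<in> poly_funs"
  using pf_add[OF _ pf_neg] by simp
lemma pf_sum: "finite S \<Longrightarrow> (\<And>i. i \<in> S \<Longrightarrow> f i \<in> poly_funs) \<Longrightarrow> (\<lambda>x. \<Sum>i\<in>S. f i x) \<in> poly_funs"
proof (induction S rule: finite_induct)
  case empty then show ?case using pf_const[of 0] by simp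
next
  case (insert a S) then show ?case using pf_add[of "f a" "\<lambda>x. \<Sum>i\<in>S. f i x"] by simp
qed
lemma pf_prod: "finite S \<Longrightarrow> (\<And>i. i \<in> S \<Longrightarrow> f i \<in> poly_funs) \<Longrightarrow> (\<lambda>x. \<Prod>i\<in>S. f i x) \<in> poly_funs"
proof (induction S rule: finite_induct)
  case empty then show ?case using pf_const[of 1] by simp
next
  case (insert a S) then show ?case using pf_mult[of "f a" "\<lambda>x. \<Prod>i\<in>S. f i x"] by simp
qed
lemma pf_power: "f \<in> poly_funs \<Longrightarrow> (\<lambda>x. f x ^ k) \<in> poly_funs"
  using pf_prod[of "{..<k}" "\<lambda>i. f"] by simp

lemma pf_lin: "(\<lambda>x. ((g::real^'n^'n) *v x) $ k) \<in> poly_funs"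
  unfolding matrix_vector_mult_def
  by (simp, rule pf_sum) (auto intro: pf_mult pf_const pf_coord)

lemma pf_comp: "f \<in> poly_funs \<Longrightarrow> (\<lambda>x. f ((M::real^'n^'n) *v x)) \<in> poly_funs"
proof (induction rule: poly_funs.induct)
  case (const c) then show ?case by (rule pf_const)
next
  case (coord i) then show ?case by (rule pf_lin)
next
  case (add f g) show ?case by (rule pf_add[OF add.IH])
next
  case (mult f g) show ?case by (rule pf_mult[OF mult.IH])
qed

section \<open>Invariant rings as function rings\<close>

definition fring :: "(real^'n \<Rightarrow> real) set \<Rightarrow> bool" where
  "fring S \<longleftrightarrow> (\<forall>c. (\<lambda>x. c) \<in> S) \<and> (\<forall>f\<in>S. \<forall>g\<in>S. (\<lambda>x. f x + g x) \<in> S) \<and>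
     (\<forall>f\<in>S. \<forall>g\<in>S. (\<lambda>x. f x * g x) \<in> S)"

lemma fring_inv: assumes "ogrp K" shows "fring (inv_polys K)"
  unfolding fring_def using assms
  by (auto intro!: inv_polysI pf_const pf_add pf_mult dest: inv_polys_pf simp: inv_polysD)

context
  fixes S :: "(real^'n \<Rightarrow> real) set" and \<phi> :: "(real^'n \<Rightarrow> real) \<Rightarrow> real"
  assumes fr: "fring S" and hom: "ring_hom_on S \<phi>"
begin

lemma fr_const: "(\<lambda>x. c) \<in> S" using fr by (simp add: fring_def)
lemma fr_add: "f \<in> S \<Longrightarrow> g \<in> S \<Longrightarrow> (\<lambda>x. f x + g x) \<in> S" using fr by (simp add: fring_def)
lemma fr_mult: "f \<in> S \<Longrightarrow> g \<in> S \<Longrightarrow> (\<lambda>x. f x * g x) \<in> S" using fr by (simp add: fring_def)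
lemma fr_neg: "f \<in> S \<Longrightarrow> (\<lambda>x. - f x) \<in> S" using fr_mult[OF fr_const[of "-1"]] by simp
lemma fr_diff: "f \<in> S \<Longrightarrow> g \<in> S \<Longrightarrow> (\<lambda>x. f x - g x) \<in> S" using fr_add[OF _ fr_neg] by simp
lemma fr_sum: "finite I \<Longrightarrow> (\<And>i. i \<in> I \<Longrightarrow> f i \<in> S) \<Longrightarrow> (\<lambda>x. \<Sum>i\<in>I. f i x) \<in> S"
proof (induction I rule: finite_induct)
  case empty then show ?case using fr_const[of 0] by simp
next
  case (insert a I) then show ?case using fr_add[of "f a" "\<lambda>x. \<Sum>i\<in>I. f i x"] by simp
qed
lemma fr_prod: "finite I \<Longrightarrow> (\<And>i. i \<in> I \<Longrightarrow> f i \<in> S) \<Longrightarrow> (\<lambda>x. \<Prod>i\<in>I. f i x) \<in> S"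
proof (induction I rule: finite_induct)
  case empty then show ?case using fr_const[of 1] by simp
next
  case (insert a I) then show ?case using fr_mult[of "f a" "\<lambda>x. \<Prod>i\<in>I. f i x"] by simp
qed
lemma fr_power: "f \<in> S \<Longrightarrow> (\<lambda>x. f x ^ k) \<in> S"
  using fr_prod[of "{..<k}" "\<lambda>i. f"] by simp

lemma h_one: "\<phi> (\<lambda>x. 1) = 1" using hom by (simp add: ring_hom_on_def)
lemma h_add: "f \<in> S \<Longrightarrow> g \<in> S \<Longrightarrow> \<phi> (\<lambda>x. f x + g x) = \<phi> f + \<phi> g"
  using hom by (simp add: ring_hom_on_def)
lemma h_mult: "f \<in> S \<Longrightarrow> g \<in> S \<Longrightarrow> \<phi> (\<lambda>x. f x * g x) = \<phi> f * \<phi> g"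
  using hom by (simp add: ring_hom_on_def)
lemma h_zero: "\<phi> (\<lambda>x. 0) = 0"
  using h_add[OF fr_const[of 0] fr_const[of 0]] by simp
lemma h_neg: "f \<in> S \<Longrightarrow> \<phi> (\<lambda>x. - f x) = - \<phi> f"
proof -
  assume f: "f \<in> S"
  have "\<phi> (\<lambda>x. f x + - f x) = \<phi> f + \<phi> (\<lambda>x. - f x)" using h_add[OF f fr_neg[OF f]] .
  then show ?thesis using h_zero by simp
qed
lemma h_diff: "f \<in> S \<Longrightarrow> g \<in> S \<Longrightarrow> \<phi> (\<lambda>x. f x - g x) = \<phi> f - \<phi> g"
  using h_add[OF _ fr_neg, of f g] h_neg[of g] by simp
lemma h_sum: "finite I \<Longrightarrow> (\<And>i. i \<in> I \<Longrightarrow> f i \<in> S) \<Longrightarrow> \<phi> (\<lambda>x. \<Sum>i\<in>I. f i x) = (\<Sum>i\<in>I. \<phi> (f i))"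
proof (induction I rule: finite_induct)
  case empty then show ?case using h_zero by simp
next
  case (insert a I)
  then show ?case using h_add[of "f a" "\<lambda>x. \<Sum>i\<in>I. f i x"] fr_sum[of I f] by simp
qed
lemma h_prod: "finite I \<Longrightarrow> (\<And>i. i \<in> I \<Longrightarrow> f i \<in> S) \<Longrightarrow> \<phi> (\<lambda>x. \<Prod>i\<in>I. f i x) = (\<Prod>i\<in>I. \<phi> (f i))"
proof (induction I rule: finite_induct)
  case empty then show ?case using h_one by simp
next
  case (insert a I)
  then show ?case using h_mult[of "f a" "\<lambda>x. \<Prod>i\<in>I. f i x"] fr_prod[of I f] by simp
qed
lemma h_power: "f \<in> S \<Longrightarrow> \<phi> (\<lambda>x. f x ^ k) = \<phi> f ^ k"
  using h_prod[of "{..<k}" "\<lambda>i. f"] by simp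

definition "\<psi> c = \<phi> (\<lambda>x. c)"

lemma psi_add: "\<psi> (a + b) = \<psi> a + \<psi> b"
  unfolding \<psi>_def using h_add[OF fr_const fr_const] by simp
lemma psi_mult: "\<psi> (a * b) = \<psi> a * \<psi> b"
  unfolding \<psi>_def using h_mult[OF fr_const fr_const] by simp
lemma psi_nat: "\<psi> (of_nat n) = of_nat n"
proof (induction n)
  case 0 then show ?case using h_zero by (simp add: \<psi>_def)
next
  case (Suc n)
  have "\<psi> 1 = 1" using h_one by (simp add: \<psi>_def)
  then show ?case using Suc psi_add[of "of_nat n" 1] by (simp add: add.commute)
qed
lemma psi_neg: "\<psi> (- a) = - \<psi> a"
  unfolding \<psi>_def using h_neg[OF fr_const] by simp
lemma psi_int: "\<psi> (of_int n) = of_int n"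
proof (cases "n \<ge> 0")
  case True then show ?thesis using psi_nat[of "nat n"] by simp
next
  case False then show ?thesis using psi_nat[of "nat (- n)"] psi_neg[of "of_int (-n)"] by simp
qed
lemma psi_rat: "r \<in> \<rat> \<Longrightarrow> \<psi> r = r"
proof -
  assume "r \<in> \<rat>"
  then obtain a b where ab: "b > 0" "r = of_int a / of_int b" by (rule Rats_cases')
  have e: "of_int b * r = of_int a" using ab by simp
  have "\<psi> (of_int b * r) = \<psi> (of_int b) * \<psi> r" by (rule psi_mult)
  also have "\<dots> = of_int b * \<psi> r" by (simp only: psi_int)
  finally have "of_int b * \<psi> r = of_int a" by (simp only: e psi_int)
  then have "of_int b * \<psi> r = of_int b * r" using e by simp
  then show ?thesis using ab(1) by simp
qed
lemma psi_nonneg: "c \<ge> 0 \<Longrightarrow> \<psi> c \<ge> 0"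
proof -
  assume "c \<ge> 0"
  then have "c = sqrt c * sqrt c" by simp
  then have "\<psi> c = \<psi> (sqrt c) * \<psi> (sqrt c)" by (metis psi_mult)
  then show ?thesis by simp
qed
lemma psi_mono: "a \<le> b \<Longrightarrow> \<psi> a \<le> \<psi> b"
  using psi_nonneg[of "b - a"] psi_add[of a "b - a"] by simp
lemma psi_id: "\<psi> c = c"
proof (rule ccontr)
  assume ne: "\<psi> c \<noteq> c"
  show False
  proof (cases "\<psi> c < c")
    case True
    then obtain r where r: "r \<in> \<rat>" "\<psi> c < r" "r < c" using Rats_dense_in_real by blast
    then show False using psi_mono[of r c] psi_rat by simp
  next
    case False
    then have "c < \<psi> c" using ne by simp
    then obtain r where r: "r \<in> \<rat>" "c < r" "r < \<psi> c" using Rats_dense_in_real by blast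
    then show False using psi_mono[of c r] psi_rat by simp
  qed
qed
lemma h_const: "\<phi> (\<lambda>x. c) = c"
  using psi_id unfolding \<psi>_def .

end


section \<open>Complex polynomial functions\<close>

inductive_set cpf :: "(complex^'n \<Rightarrow> complex) set" where
  cconst: "(\<lambda>z. c) \<in> cpf"
| ccoord: "(\<lambda>z. z $ i) \<in> cpf"
| cadd: "F \<in> cpf \<Longrightarrow> G \<in> cpf \<Longrightarrow> (\<lambda>z. F z + G z) \<in> cpf"
| cmult: "F \<in> cpf \<Longrightarrow> G \<in> cpf \<Longrightarrow> (\<lambda>z. F z * G z) \<in> cpf"

lemma cpf_neg: "F \<in> cpf \<Longrightarrow> (\<lambda>z. - F z) \<in> cpf"
  using cmult[OF cconst[of "-1"]] by simp
lemma cpf_diff: "F \<in> cpf \<Longrightarrow> G \<in> cpf \<Longrightarrow> (\<lambda>z. F z - G z) \<in> cpf"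
  using cadd[OF _ cpf_neg] by simp
lemma cpf_sum: "finite S \<Longrightarrow> (\<And>i. i \<in> S \<Longrightarrow> F i \<in> cpf) \<Longrightarrow> (\<lambda>z. \<Sum>i\<in>S. F i z) \<in> cpf"
proof (induction S rule: finite_induct)
  case empty then show ?case using cconst[of 0] by simp
next
  case (insert a S) then show ?case using cadd[of "F a" "\<lambda>z. \<Sum>i\<in>S. F i z"] by simp
qed
lemma cpf_prod: "finite S \<Longrightarrow> (\<And>i. i \<in> S \<Longrightarrow> F i \<in> cpf) \<Longrightarrow> (\<lambda>z. \<Prod>i\<in>S. F i z) \<in> cpf"
proof (induction S rule: finite_induct)
  case empty then show ?case using cconst[of 1] by simp
next
  case (insert a S) then show ?case using cmult[of "F a" "\<lambda>z. \<Prod>i\<in>S. F i z"] by simp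
qed
lemma cpf_power: "F \<in> cpf \<Longrightarrow> (\<lambda>z. F z ^ k) \<in> cpf"
  using cpf_prod[of "{..<k}" "\<lambda>i. F"] by simp
lemma cpf_cmul: "F \<in> cpf \<Longrightarrow> (\<lambda>z. c * F z) \<in> cpf"
  using cmult[OF cconst] by blast

lemma cpf_uni: "(\<lambda>z. poly p (z $ j)) \<in> cpf"
  unfolding poly_altdef
  by (rule cpf_sum) (auto intro!: cpf_cmul cpf_power ccoord)

definition cvec :: "real^'n \<Rightarrow> complex^'n" where
  "cvec x = (\<chi> j. complex_of_real (x $ j))"
definition cmat :: "real^'n^'n \<Rightarrow> complex^'n^'n" where
  "cmat g = (\<chi> i j. complex_of_real (g $ i $ j))"
definition cnjv :: "complex^'n \<Rightarrow> complex^'n" where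
  "cnjv z = (\<chi> j. cnj (z $ j))"
definition imv :: "complex^'n \<Rightarrow> real^'n" where
  "imv z = (\<chi> j. Im (z $ j))"
definition RR :: "(complex^'n \<Rightarrow> complex) \<Rightarrow> bool" where
  "RR F \<longleftrightarrow> (\<forall>x. Im (F (cvec x)) = 0)"
definition ReF :: "(complex^'n \<Rightarrow> complex) \<Rightarrow> real^'n \<Rightarrow> real" where
  "ReF F = (\<lambda>x. Re (F (cvec x)))"

lemma cvec_nth [simp]: "cvec x $ j = complex_of_real (x $ j)"
  by (simp add: cvec_def)
lemma cmat_nth [simp]: "cmat g $ i $ j = complex_of_real (g $ i $ j)"
  by (simp add: cmat_def)
lemma cnjv_nth [simp]: "cnjv z $ j = cnj (z $ j)"
  by (simp add: cnjv_def)
lemma imv_nth [simp]: "imv z $ j = Im (z $ j)"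
  by (simp add: imv_def)
lemma cnjv_cnjv [simp]: "cnjv (cnjv z) = z"
  by (simp add: vec_eq_iff)

lemma cmat_cvec: "cmat g *v cvec x = cvec (g *v x)"
  by (simp add: vec_eq_iff matrix_vector_mult_def)

lemma cmat_nth_mv: "(cmat g *v z) $ k = (\<Sum>l\<in>UNIV. complex_of_real (g $ k $ l) * z $ l)"
  by (simp add: matrix_vector_mult_def)

lemma imv_cmat: "imv (cmat g *v z) = g *v imv z"
  by (simp add: vec_eq_iff matrix_vector_mult_def Im_sum)

lemma cnjv_cmat: "cnjv (cmat g *v z) = cmat g *v cnjv z"
  by (simp add: vec_eq_iff matrix_vector_mult_def)

lemma cmat_mult: "cmat (a ** b) = cmat a ** cmat b"
  by (simp add: vec_eq_iff matrix_matrix_mult_def)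

lemma cmat_one: "cmat (mat 1) = mat 1"
  by (simp add: vec_eq_iff mat_def)

lemma cvec_axis: "cvec (x + t *\<^sub>R axis j 1) = cvec x + axis j (complex_of_real t)"
  by (simp add: vec_eq_iff axis_def)

lemma RR_eq: "RR F \<Longrightarrow> F (cvec x) = complex_of_real (ReF F x)"
  by (simp add: RR_def ReF_def complex_eq_iff)

lemma cpf_lin: "(\<lambda>z. (cmat g *v z) $ k) \<in> cpf"
  unfolding cmat_nth_mv
  by (rule cpf_sum) (auto intro!: cpf_cmul ccoord)

lemma cpf_comp: "F \<in> cpf \<Longrightarrow> (\<lambda>z. F (cmat g *v z)) \<in> cpf"
proof (induction rule: cpf.induct)
  case (cconst c) then show ?case by (rule cpf.cconst)
next
  case (ccoord i) then show ?case by (rule cpf_lin)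
next
  case (cadd F G) show ?case by (rule cpf.cadd[OF cadd.IH])
next
  case (cmult F G) show ?case by (rule cpf.cmult[OF cmult.IH])
qed

lemma cpf_cnj: "F \<in> cpf \<Longrightarrow> (\<lambda>z. cnj (F (cnjv z))) \<in> cpf"
proof (induction rule: cpf.induct)
  case (cconst c) then show ?case by (rule cpf.cconst)
next
  case (ccoord i) then show ?case by (simp add: cpf.ccoord)
next
  case (cadd F G) show ?case using cpf.cadd[OF cadd.IH] by simp
next
  case (cmult F G) show ?case using cpf.cmult[OF cmult.IH] by simp
qed

lemma cpf_Re_Im: "F \<in> cpf \<Longrightarrow> (\<lambda>x. Re (F (cvec x))) \<in> poly_funs \<and> (\<lambda>x. Im (F (cvec x))) \<in> poly_funs"
proof (induction rule: cpf.induct)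
  case (cconst c) then show ?case by (simp add: pf_const)
next
  case (ccoord i) then show ?case by (simp add: pf_coord pf_const)
next
  case (cadd F G) then show ?case by (simp add: pf_add)
next
  case (cmult F G) then show ?case by (simp add: pf_add pf_diff pf_mult)
qed

lemma ReF_pf: "F \<in> cpf \<Longrightarrow> ReF F \<in> poly_funs"
  using cpf_Re_Im unfolding ReF_def by blast

lemma pf_ext: "f \<in> poly_funs \<Longrightarrow> \<exists>F\<in>cpf. \<forall>x. F (cvec x) = complex_of_real (f x)"
proof (induction rule: poly_funs.induct)
  case (const c) show ?case by (rule bexI[of _ "\<lambda>z. complex_of_real c"]) (auto intro: cconst)
next
  case (coord i) show ?case by (rule bexI[of _ "\<lambda>z. z $ i"]) (auto intro: ccoord)
next
  case (add f g)
  then obtain F G where "F \<in> cpf" "G \<in> cpf" "\<forall>x. F (cvec x) = complex_of_real (f x)"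
    "\<forall>x. G (cvec x) = complex_of_real (g x)" by blast
  then show ?case by (intro bexI[of _ "\<lambda>z. F z + G z"]) (auto intro: cadd)
next
  case (mult f g)
  then obtain F G where "F \<in> cpf" "G \<in> cpf" "\<forall>x. F (cvec x) = complex_of_real (f x)"
    "\<forall>x. G (cvec x) = complex_of_real (g x)" by blast
  then show ?case by (intro bexI[of _ "\<lambda>z. F z * G z"]) (auto intro: cmult)
qed

lemma pf_ext': assumes "f \<in> poly_funs"
  obtains F where "F \<in> cpf" "RR F" "ReF F = f" "\<And>x. F (cvec x) = complex_of_real (f x)"
proof -
  obtain F where F: "F \<in> cpf" "\<forall>x. F (cvec x) = complex_of_real (f x)" using pf_ext[OF assms] by blast
  then have "RR F" "ReF F = f" by (auto simp: RR_def ReF_def)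
  then show ?thesis using that F by blast
qed

section \<open>Complex partial derivatives\<close>

lemma cpf_deriv_ex:
  "F \<in> cpf \<Longrightarrow> \<exists>D\<in>cpf. \<forall>w t. ((\<lambda>s. F (w + axis j s)) has_field_derivative D (w + axis j t)) (at t)"
proof (induction rule: cpf.induct)
  case (cconst c)
  show ?case by (rule bexI[of _ "\<lambda>z. 0"]) (auto intro: cpf.cconst)
next
  case (ccoord i)
  show ?case
  proof (rule bexI[of _ "\<lambda>z. if i = j then 1 else 0"])
    show "(\<lambda>z. if i = j then 1 else 0 :: complex) \<in> cpf" by (rule cpf.cconst)
    show "\<forall>w t. ((\<lambda>s. (w + axis j s) $ i) has_field_derivative (if i = j then 1 else 0)) (at t)"
      by (auto simp: axis_def intro!: derivative_eq_intros)
  qed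
next
  case (cadd F G)
  then obtain D E where DE: "D \<in> cpf" "E \<in> cpf"
    "\<forall>w t. ((\<lambda>s. F (w + axis j s)) has_field_derivative D (w + axis j t)) (at t)"
    "\<forall>w t. ((\<lambda>s. G (w + axis j s)) has_field_derivative E (w + axis j t)) (at t)" by blast
  show ?case
    by (rule bexI[of _ "\<lambda>z. D z + E z"]) (use DE in \<open>auto intro!: derivative_eq_intros cpf.cadd\<close>)
next
  case (cmult F G)
  then obtain D E where DE: "D \<in> cpf" "E \<in> cpf"
    "\<forall>w t. ((\<lambda>s. F (w + axis j s)) has_field_derivative D (w + axis j t)) (at t)"
    "\<forall>w t. ((\<lambda>s. G (w + axis j s)) has_field_derivative E (w + axis j t)) (at t)" by blast
  show ?case
  proof (rule bexI[of _ "\<lambda>z. D z * G z + E z * F z"])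
    show "(\<lambda>z. D z * G z + E z * F z) \<in> cpf" using DE cmult.hyps by (auto intro!: cpf.cadd cpf.cmult)
    show "\<forall>w t. ((\<lambda>s. F (w + axis j s) * G (w + axis j s)) has_field_derivative
       D (w + axis j t) * G (w + axis j t) + E (w + axis j t) * F (w + axis j t)) (at t)"
      using DE by (auto intro!: DERIV_mult)
  qed
qed

lemma axis_zero' [simp]: "axis j (0::'a::zero) = 0"
  by (simp add: axis_def vec_eq_iff)

definition cpd :: "'n \<Rightarrow> (complex^'n \<Rightarrow> complex) \<Rightarrow> complex^'n \<Rightarrow> complex" where
  "cpd j F w = deriv (\<lambda>s. F (w + axis j s)) 0"

lemma cpd_has:
  assumes "F \<in> cpf"
  shows "((\<lambda>s. F (w + axis j s)) has_field_derivative cpd j F (w + axis j t)) (at t)"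
proof -
  obtain D where D: "D \<in> cpf" "\<forall>w t. ((\<lambda>s. F (w + axis j s)) has_field_derivative D (w + axis j t)) (at t)"
    using cpf_deriv_ex[OF assms] by blast
  have "cpd j F w' = D w'" for w'
    unfolding cpd_def using D(2)[rule_format, of w' 0] by (simp add: DERIV_imp_deriv)
  then show ?thesis using D by simp
qed

lemma cpd_cpf: "F \<in> cpf \<Longrightarrow> cpd j F \<in> cpf"
proof -
  assume F: "F \<in> cpf"
  obtain D where D: "D \<in> cpf" "\<forall>w t. ((\<lambda>s. F (w + axis j s)) has_field_derivative D (w + axis j t)) (at t)"
    using cpf_deriv_ex[OF F] by blast
  have "cpd j F w' = D w'" for w'
    unfolding cpd_def using D(2)[rule_format, of w' 0] by (simp add: DERIV_imp_deriv)
  then have "cpd j F = D" by blast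
  then show ?thesis using D by simp
qed

lemma cpd_eqI: "((\<lambda>s. F (w + axis j s)) has_field_derivative D) (at 0) \<Longrightarrow> cpd j F w = D"
  unfolding cpd_def by (rule DERIV_imp_deriv)

lemma cpd_has0: "F \<in> cpf \<Longrightarrow> ((\<lambda>s. F (w + axis j s)) has_field_derivative cpd j F w) (at 0)"
  using cpd_has[of F w j 0] by simp

lemma cpd_const [simp]: "cpd j (\<lambda>z. c) w = 0"
  by (rule cpd_eqI) (auto intro!: derivative_eq_intros)
lemma cpd_coord [simp]: "cpd j (\<lambda>z. z $ i) w = (if i = j then 1 else 0)"
  by (rule cpd_eqI) (auto simp: axis_def intro!: derivative_eq_intros)
lemma cpd_add: "F \<in> cpf \<Longrightarrow> G \<in> cpf \<Longrightarrow> cpd j (\<lambda>z. F z + G z) w = cpd j F w + cpd j G w"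
  by (rule cpd_eqI) (auto intro!: derivative_eq_intros cpd_has0)
lemma cpd_mult: "F \<in> cpf \<Longrightarrow> G \<in> cpf \<Longrightarrow> cpd j (\<lambda>z. F z * G z) w = cpd j F w * G w + F w * cpd j G w"
  by (rule cpd_eqI) (auto intro!: derivative_eq_intros cpd_has0)
lemma cpd_cmul: "F \<in> cpf \<Longrightarrow> cpd j (\<lambda>z. c * F z) w = c * cpd j F w"
  using cpd_mult[OF cconst, of F j c w] by simp
lemma cpd_sum: "finite S \<Longrightarrow> (\<And>i. i \<in> S \<Longrightarrow> F i \<in> cpf) \<Longrightarrow>
    cpd j (\<lambda>z. \<Sum>i\<in>S. F i z) w = (\<Sum>i\<in>S. cpd j (F i) w)"
proof (induction S rule: finite_induct)
  case empty then show ?case by simp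
next
  case (insert a S)
  then show ?case using cpd_add[of "F a" "\<lambda>z. \<Sum>i\<in>S. F i z" j w] cpf_sum[of S F] by simp
qed

lemma cpd_lin: "cpd j (\<lambda>z. (cmat g *v z) $ k) w = complex_of_real (g $ k $ j)"
  unfolding cmat_nth_mv
  by (subst cpd_sum) (auto intro!: cpf_cmul ccoord simp: cpd_cmul[OF ccoord] if_distrib cong: if_cong)

lemma cpd_comp:
  "F \<in> cpf \<Longrightarrow> cpd j (\<lambda>z. F (cmat g *v z)) w = (\<Sum>k\<in>UNIV. complex_of_real (g $ k $ j) * cpd k F (cmat g *v w))"
proof (induction rule: cpf.induct)
  case (cconst c) then show ?case by simp
next
  case (ccoord i) then show ?case by (simp add: cpd_lin if_distrib cong: if_cong)
next
  case (cadd F G)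
  then show ?case by (simp add: cpd_add cpf_comp sum.distrib algebra_simps)
next
  case (cmult F G)
  then show ?case by (simp add: cpd_mult cpf_comp sum.distrib sum_distrib_left sum_distrib_right algebra_simps)
qed

lemma cpd_cnj:
  "F \<in> cpf \<Longrightarrow> cpd j (\<lambda>z. cnj (F (cnjv z))) w = cnj (cpd j F (cnjv w))"
proof (induction rule: cpf.induct)
  case (cconst c) then show ?case by simp
next
  case (ccoord i) then show ?case by simp
next
  case (cadd F G)
  then show ?case by (simp add: cpd_add cpf_cnj)
next
  case (cmult F G)
  then show ?case by (simp add: cpd_mult cpf_cnj)
qed

section \<open>Link with real partial derivatives\<close>

lemma cpd_real_has:
  assumes "F \<in> cpf"
  shows "((\<lambda>t. F (cvec (x + t *\<^sub>R axis j 1))) has_vector_derivative cpd j F (cvec (x + t *\<^sub>R axis j 1))) (at t)"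
proof -
  have "((\<lambda>s. F (cvec x + axis j s)) has_field_derivative cpd j F (cvec x + axis j (of_real t))) (at (of_real t))"
    by (rule cpd_has[OF assms])
  from has_vector_derivative_real_field[OF this]
  show ?thesis by (simp add: cvec_axis)
qed

lemma partial_deriv_ReF:
  assumes "F \<in> cpf"
  shows "partial_deriv (ReF F) j x = Re (cpd j F (cvec x))"
proof -
  have "((\<lambda>t. Re (F (cvec (x + t *\<^sub>R axis j 1)))) has_real_derivative Re (cpd j F (cvec (x + 0 *\<^sub>R axis j 1)))) (at 0)"
    by (rule has_field_derivative_Re[OF cpd_real_has[OF assms]])
  then show ?thesis unfolding partial_deriv_def ReF_def by (simp add: DERIV_imp_deriv)
qed

lemma cpd_RR:
  assumes "F \<in> cpf" "RR F"
  shows "Im (cpd j F (cvec x)) = 0"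
proof -
  have h: "((\<lambda>t. Im (F (cvec (x + t *\<^sub>R axis j 1)))) has_real_derivative Im (cpd j F (cvec (x + 0 *\<^sub>R axis j 1)))) (at 0)"
    using cpd_real_has[OF assms(1), of x j 0] by (simp add: has_vector_derivative_complex_iff)
  have "(\<lambda>t. Im (F (cvec (x + t *\<^sub>R axis j 1)))) = (\<lambda>t. 0)" using assms(2) by (simp add: RR_def)
  then have "((\<lambda>t. Im (F (cvec (x + t *\<^sub>R axis j 1)))) has_real_derivative 0) (at 0)" by simp
  with h show ?thesis using DERIV_unique by fastforce
qed

lemma cpd_RR_eq:
  assumes "F \<in> cpf" "RR F"
  shows "cpd j F (cvec x) = complex_of_real (partial_deriv (ReF F) j x)"
  using cpd_RR[OF assms] partial_deriv_ReF[OF assms(1)] by (simp add: complex_eq_iff)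

definition DD :: "(complex^'n \<Rightarrow> complex) \<Rightarrow> complex^'n \<Rightarrow> complex" where
  "DD F = (\<lambda>z. \<Sum>j\<in>UNIV. (cpd j F z)^2)"

lemma DD_cpf: "F \<in> cpf \<Longrightarrow> DD F \<in> cpf"
  unfolding DD_def by (intro cpf_sum cpf_power cpd_cpf) auto

lemma DD_real:
  assumes "F \<in> cpf" "RR F"
  shows "DD F (cvec x) = complex_of_real (dd (ReF F) x)"
  unfolding DD_def dd_def using cpd_RR_eq[OF assms] by simp

lemma DD_RR: assumes "F \<in> cpf" "RR F" shows "RR (DD F)"
  unfolding RR_def[of "DD F"] using DD_real[OF assms] by simp

lemma dd_ReF: assumes "F \<in> cpf" "RR F" shows "dd (ReF F) = ReF (DD F)"
proof (rule ext)
  fix x show "dd (ReF F) x = ReF (DD F) x" using DD_real[OF assms, of x] by (simp add: ReF_def[of "DD F"])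
qed

lemma orth_sumsq:
  assumes "orthogonal_matrix (s::real^'n^'n)"
  shows "(\<Sum>j\<in>UNIV. (\<Sum>k\<in>UNIV. s $ k $ j * v $ k)^2) = (\<Sum>k\<in>UNIV. (v $ k)^2)"
proof -
  have l: "linear (\<lambda>v. transpose s *v v)" by (rule matrix_vector_mul_linear)
  have m: "matrix (\<lambda>v. transpose s *v v) = transpose s" by (rule matrix_of_matrix_vector_mul)
  have ot: "orthogonal_transformation (\<lambda>v. transpose s *v v)"
    using l m assms orthogonal_transformation_matrix orthogonal_matrix_transpose by metis
  have "norm (transpose s *v v) = norm v" by (rule orthogonal_transformation_norm[OF ot])
  then have "inner (transpose s *v v) (transpose s *v v) = inner v v" by (metis power2_norm_eq_inner)
  moreover have "(transpose s *v v) $ j = (\<Sum>k\<in>UNIV. s $ k $ j * v $ k)" for j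
    by (simp add: matrix_vector_mult_def transpose_def)
  ultimately show ?thesis by (simp add: inner_vec_def power2_eq_square)
qed

lemma dd_inv:
  assumes K: "ogrp K" and f: "f \<in> inv_polys K"
  shows "dd f \<in> inv_polys K"
proof -
  obtain F where F: "F \<in> cpf" "RR F" "ReF F = f" using pf_ext'[OF inv_polys_pf[OF f]] by blast
  have pf: "dd f \<in> poly_funs" using dd_ReF[OF F(1,2)] F(3) ReF_pf[OF DD_cpf[OF F(1)]] by simp
  show ?thesis
  proof (rule inv_polysI[OF K pf])
    fix \<sigma> x assume s: "\<sigma> \<in> K"
    let ?F = "\<lambda>z. F (cmat \<sigma> *v z)"
    have F': "?F \<in> cpf" by (rule cpf_comp[OF F(1)])
    have RF': "RR ?F" using F(2) by (simp add: RR_def cmat_cvec)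
    have "ReF ?F = (\<lambda>x. f (\<sigma> *v x))" using F(3) by (auto simp: ReF_def cmat_cvec)
    also have "\<dots> = f" using inv_polysD[OF K f s] by blast
    finally have eqf: "ReF ?F = f" .
    have pd: "partial_deriv f j x = (\<Sum>k\<in>UNIV. \<sigma> $ k $ j * partial_deriv f k (\<sigma> *v x))" for j
    proof -
      have "partial_deriv f j x = Re (cpd j ?F (cvec x))"
        using partial_deriv_ReF[OF F'] eqf by metis
      also have "\<dots> = Re (\<Sum>k\<in>UNIV. complex_of_real (\<sigma> $ k $ j) * cpd k F (cvec (\<sigma> *v x)))"
        by (simp add: cpd_comp[OF F(1)] cmat_cvec)
      also have "\<dots> = (\<Sum>k\<in>UNIV. \<sigma> $ k $ j * partial_deriv f k (\<sigma> *v x))"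
        using cpd_RR_eq[OF F(1,2)] F(3) by (simp add: Re_sum)
      finally show ?thesis .
    qed
    have "dd f x = (\<Sum>j\<in>UNIV. (\<Sum>k\<in>UNIV. \<sigma> $ k $ j * (\<chi> k. partial_deriv f k (\<sigma> *v x)) $ k)^2)"
      unfolding dd_def using pd by simp
    also have "\<dots> = (\<Sum>k\<in>UNIV. ((\<chi> k. partial_deriv f k (\<sigma> *v x)) $ k)^2)"
      by (rule orth_sumsq[OF ogrp_orth[OF K s]])
    also have "\<dots> = dd f (\<sigma> *v x)" by (simp add: dd_def)
    finally show "dd f (\<sigma> *v x) = dd f x" by simp
  qed
qed


section \<open>Characteristic polynomials\<close>

lemma cp_coeff_mult:
  fixes c :: "'a::comm_ring_1"
  shows "coeff ([:- c, 1:] * P) k = - c * coeff P k + (if k = 0 then 0 else coeff P (k - 1))"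
  by (cases k) auto

lemma cp_top:
  fixes a :: "'b \<Rightarrow> 'a::comm_ring_1"
  assumes "finite I"
  shows "coeff (\<Prod>i\<in>I. [:- a i, 1:]) (card I) = 1 \<and> (\<forall>k>card I. coeff (\<Prod>i\<in>I. [:- a i, 1:]) k = 0)"
  using assms
proof (induction I rule: finite_induct)
  case empty then show ?case by (auto simp: coeff_1)
next
  case (insert b I)
  let ?P = "\<Prod>i\<in>I. [:- a i, 1:]"
  have e: "(\<Prod>i\<in>insert b I. [:- a i, 1:]) = [:- a b, 1:] * ?P" using insert by simp
  show ?case unfolding e cp_coeff_mult using insert by (auto simp del: mult_pCons_left)
qed

lemma cp_degree:
  fixes a :: "'b \<Rightarrow> 'a::comm_ring_1"
  assumes "finite I"
  shows "degree (\<Prod>i\<in>I. [:- a i, 1:]) \<le> card I"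
  using cp_top[OF assms, of a] by (intro degree_le) auto

lemma cp_poly:
  fixes a :: "'b \<Rightarrow> 'a::comm_ring_1"
  assumes "finite I"
  shows "poly (\<Prod>i\<in>I. [:- a i, 1:]) t = (\<Sum>k\<le>card I. coeff (\<Prod>i\<in>I. [:- a i, 1:]) k * t ^ k)"
proof -
  have "poly (\<Prod>i\<in>I. [:- a i, 1:]) t = poly (\<Sum>k\<le>card I. monom (coeff (\<Prod>i\<in>I. [:- a i, 1:]) k) k) t"
    by (subst poly_as_sum_of_monoms'[OF cp_degree[OF assms]]) simp
  also have "\<dots> = (\<Sum>k\<le>card I. coeff (\<Prod>i\<in>I. [:- a i, 1:]) k * t ^ k)"
    by (simp add: poly_sum poly_monom)
  finally show ?thesis .
qed

lemma pf_cp: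
  assumes "finite I" "\<And>i. i \<in> I \<Longrightarrow> a i \<in> poly_funs"
  shows "(\<lambda>x. coeff (\<Prod>i\<in>I. [:- a i x, 1:]) k) \<in> poly_funs"
  using assms
proof (induction I arbitrary: k rule: finite_induct)
  case empty then show ?case by (simp add: coeff_1 pf_const)
next
  case (insert b I)
  have e: "(\<lambda>x. coeff (\<Prod>i\<in>insert b I. [:- a i x, 1:]) k) =
     (\<lambda>x. - a b x * coeff (\<Prod>i\<in>I. [:- a i x, 1:]) k + (if k = 0 then 0 else coeff (\<Prod>i\<in>I. [:- a i x, 1:]) (k - 1)))"
    using insert.hyps by (simp del: mult_pCons_left add: cp_coeff_mult)
  have m1: "(\<lambda>x. - a b x * coeff (\<Prod>i\<in>I. [:- a i x, 1:]) k) \<in> poly_funs"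
    using insert by (intro pf_mult pf_neg) auto
  have m2: "(\<lambda>x. if k = 0 then 0 else coeff (\<Prod>i\<in>I. [:- a i x, 1:]) (k - 1)) \<in> poly_funs"
    using insert by (cases "k = 0") (auto intro: pf_const)
  show ?case unfolding e by (rule pf_add[OF m1 m2])
qed

lemma cpf_cp:
  assumes "finite I" "\<And>i. i \<in> I \<Longrightarrow> a i \<in> cpf"
  shows "(\<lambda>z. coeff (\<Prod>i\<in>I. [:- a i z, 1:]) k) \<in> cpf"
  using assms
proof (induction I arbitrary: k rule: finite_induct)
  case empty then show ?case by (simp add: coeff_1 cconst)
next
  case (insert b I)
  have e: "(\<lambda>z. coeff (\<Prod>i\<in>insert b I. [:- a i z, 1:]) k) =
     (\<lambda>z. - a b z * coeff (\<Prod>i\<in>I. [:- a i z, 1:]) k + (if k = 0 then 0 else coeff (\<Prod>i\<in>I. [:- a i z, 1:]) (k - 1)))"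
    using insert.hyps by (simp del: mult_pCons_left add: cp_coeff_mult)
  have m1: "(\<lambda>z. - a b z * coeff (\<Prod>i\<in>I. [:- a i z, 1:]) k) \<in> cpf"
    using insert by (intro cmult cpf_neg) auto
  have m2: "(\<lambda>z. if k = 0 then 0 else coeff (\<Prod>i\<in>I. [:- a i z, 1:]) (k - 1)) \<in> cpf"
    using insert by (cases "k = 0") (auto intro: cconst)
  show ?case unfolding e by (rule cadd[OF m1 m2])
qed

lemma cp_of_real:
  assumes "finite I"
  shows "coeff (\<Prod>i\<in>I. [:- complex_of_real (b i), 1:]) k = complex_of_real (coeff (\<Prod>i\<in>I. [:- b i, 1:]) k)"
  using assms
proof (induction I arbitrary: k rule: finite_induct)
  case empty then show ?case by (simp add: coeff_1)
next
  case (insert c I)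
  then show ?case by (simp del: mult_pCons_left add: cp_coeff_mult)
qed

lemma cp_reindex:
  assumes "ogrp G" "\<sigma> \<in> G"
  shows "(\<Prod>g\<in>G. P (g ** \<sigma>)) = (\<Prod>g\<in>G. P g)"
  using prod.reindex_bij_betw[OF ogrp_bij[OF assms], of P] .

lemma sum_reindex_grp:
  assumes "ogrp G" "\<sigma> \<in> G"
  shows "(\<Sum>g\<in>G. P (g ** \<sigma>)) = (\<Sum>g\<in>G. P g)"
  using sum.reindex_bij_betw[OF ogrp_bij[OF assms], of P] .

section \<open>The ideal generated by univariate polynomials\<close>

definition inJ :: "('n \<Rightarrow> complex poly) \<Rightarrow> (complex^'n \<Rightarrow> complex) \<Rightarrow> bool" where
  "inJ q F \<longleftrightarrow> (\<exists>r. (\<forall>j. r j \<in> cpf) \<and> (\<forall>z. F z = (\<Sum>j\<in>UNIV. r j z * poly (q j) (z $ j))))"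

lemma inJ_cong: "inJ q F \<Longrightarrow> (\<And>z. G z = F z) \<Longrightarrow> inJ q G"
  unfolding inJ_def by metis

lemma inJ_zero: "inJ q (\<lambda>z. 0)"
  unfolding inJ_def by (rule exI[of _ "\<lambda>j z. 0"]) (auto intro: cconst)

lemma inJ_add: "inJ q F \<Longrightarrow> inJ q G \<Longrightarrow> inJ q (\<lambda>z. F z + G z)"
proof -
  assume "inJ q F" "inJ q G"
  then obtain r1 r2 where r: "\<forall>j. r1 j \<in> cpf" "\<forall>z. F z = (\<Sum>j\<in>UNIV. r1 j z * poly (q j) (z $ j))"
    "\<forall>j. r2 j \<in> cpf" "\<forall>z. G z = (\<Sum>j\<in>UNIV. r2 j z * poly (q j) (z $ j))" unfolding inJ_def by blast
  show ?thesis unfolding inJ_def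
    by (rule exI[of _ "\<lambda>j z. r1 j z + r2 j z"]) (use r in \<open>auto intro: cadd simp: sum.distrib distrib_right\<close>)
qed

lemma inJ_mult: "inJ q F \<Longrightarrow> P \<in> cpf \<Longrightarrow> inJ q (\<lambda>z. P z * F z)"
proof -
  assume "inJ q F" and P: "P \<in> cpf"
  then obtain r1 where r: "\<forall>j. r1 j \<in> cpf" "\<forall>z. F z = (\<Sum>j\<in>UNIV. r1 j z * poly (q j) (z $ j))"
    unfolding inJ_def by blast
  show ?thesis unfolding inJ_def
    by (rule exI[of _ "\<lambda>j z. P z * r1 j z"]) (use r P in \<open>auto intro: cmult simp: sum_distrib_left mult.assoc\<close>)
qed

lemma inJ_sum: "finite S \<Longrightarrow> (\<And>i. i \<in> S \<Longrightarrow> inJ q (F i)) \<Longrightarrow> inJ q (\<lambda>z. \<Sum>i\<in>S. F i z)"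
proof (induction S rule: finite_induct)
  case empty then show ?case by (simp add: inJ_zero)
next
  case (insert a S) then show ?case using inJ_add[of q "F a" "\<lambda>z. \<Sum>i\<in>S. F i z"] by simp
qed

lemma inJ_gen:
  assumes "q j dvd u" "P \<in> cpf"
  shows "inJ q (\<lambda>z. P z * poly u (z $ j))"
proof -
  obtain w where w: "u = q j * w" using assms(1) by (auto elim: dvdE)
  let ?r = "\<lambda>j' z. if j' = j then P z * poly w (z $ j) else 0"
  have "\<forall>j'. ?r j' \<in> cpf"
  proof
    fix j' show "?r j' \<in> cpf" by (cases "j' = j") (use assms(2) in \<open>auto intro!: cmult cpf_uni cconst\<close>)
  qed
  moreover have "P z * poly u (z $ j) = (\<Sum>j'\<in>UNIV. ?r j' z * poly (q j') (z $ j'))" for z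
  proof -
    have "(\<Sum>j'\<in>UNIV. ?r j' z * poly (q j') (z $ j')) = (\<Sum>j'\<in>UNIV. if j' = j then P z * poly w (z $ j) * poly (q j) (z $ j) else 0)"
      by (rule sum.cong) auto
    also have "\<dots> = P z * poly w (z $ j) * poly (q j) (z $ j)" by simp
    finally show ?thesis using w by (simp add: mult_ac)
  qed
  ultimately show ?thesis unfolding inJ_def by (intro exI[of _ ?r]) auto
qed

lemma inJ_binom:
  assumes A: "A \<in> cpf" and B: "B \<in> cpf"
    and JA: "inJ p (\<lambda>z. A z ^ m1)" and JB: "inJ p (\<lambda>z. B z ^ m2)"
  shows "inJ p (\<lambda>z. (A z + B z) ^ (m1 + m2))"
proof -
  let ?n = "m1 + m2"
  have "inJ p (\<lambda>z. of_nat (?n choose k) * A z ^ k * B z ^ (?n - k))" if "k \<le> ?n" for k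
  proof (cases "m1 \<le> k")
    case True
    have "inJ p (\<lambda>z. (of_nat (?n choose k) * A z ^ (k - m1) * B z ^ (?n - k)) * A z ^ m1)"
      by (rule inJ_mult[OF JA]) (auto intro!: cmult cconst cpf_power A B)
    moreover have "of_nat (?n choose k) * A z ^ k * B z ^ (?n - k) = (of_nat (?n choose k) * A z ^ (k - m1) * B z ^ (?n - k)) * A z ^ m1" for z
      using True by (simp add: power_add[symmetric] mult_ac)
    ultimately show ?thesis by (rule inJ_cong)
  next
    case False
    then have le: "m2 \<le> ?n - k" by simp
    have "inJ p (\<lambda>z. (of_nat (?n choose k) * A z ^ k * B z ^ (?n - k - m2)) * B z ^ m2)"
      by (rule inJ_mult[OF JB]) (auto intro!: cmult cconst cpf_power A B)
    moreover have "of_nat (?n choose k) * A z ^ k * B z ^ (?n - k) = (of_nat (?n choose k) * A z ^ k * B z ^ (?n - k - m2)) * B z ^ m2" for z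
    proof -
      have "?n - k = (?n - k - m2) + m2" using le by simp
      then have "B z ^ (?n - k) = B z ^ (?n - k - m2) * B z ^ m2" by (metis power_add)
      then show ?thesis by (simp add: mult_ac)
    qed
    ultimately show ?thesis by (rule inJ_cong)
  qed
  then have "inJ p (\<lambda>z. \<Sum>k\<le>?n. of_nat (?n choose k) * A z ^ k * B z ^ (?n - k))"
    by (intro inJ_sum) auto
  then show ?thesis by (rule inJ_cong) (simp add: binomial_ring)
qed

lemma inJ_pow_sum:
  assumes "finite T" "T \<noteq> {}" "\<And>j. j \<in> T \<Longrightarrow> a j \<in> cpf" "\<And>j. j \<in> T \<Longrightarrow> inJ p (\<lambda>z. a j z ^ m)"
  shows "inJ p (\<lambda>z. (\<Sum>j\<in>T. a j z) ^ (m * card T))"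
  using assms
proof (induction T rule: finite_ne_induct)
  case (singleton x) then show ?case by simp
next
  case (insert x F)
  have e: "m * card (insert x F) = m + m * card F" using insert.hyps by simp
  have "inJ p (\<lambda>z. (a x z + (\<Sum>j\<in>F. a j z)) ^ (m + m * card F))"
    by (rule inJ_binom) (use insert in \<open>auto intro: cpf_sum\<close>)
  then show ?case using insert.hyps by (simp add: e)
qed

lemma inJ_power:
  fixes q p :: "'n::finite \<Rightarrow> complex poly"
  assumes "inJ q P" "\<And>j. p j dvd q j ^ m"
  shows "inJ p (\<lambda>z. P z ^ (m * CARD('n)))"
proof -
  obtain r where r: "\<forall>j. r j \<in> cpf" "\<forall>z. P z = (\<Sum>j\<in>(UNIV::'n set). r j z * poly (q j) (z $ j))"
    using assms(1) unfolding inJ_def by blast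
  let ?a = "\<lambda>j z. r j z * poly (q j) (z $ j)"
  have "inJ p (\<lambda>z. (\<Sum>j\<in>UNIV. ?a j z) ^ (m * card (UNIV::'n set)))"
  proof (rule inJ_pow_sum)
    show "?a j \<in> cpf" for j using r by (auto intro: cmult cpf_uni)
    show "inJ p (\<lambda>z. ?a j z ^ m)" for j
    proof -
      have "inJ p (\<lambda>z. r j z ^ m * poly (q j ^ m) (z $ j))"
        by (rule inJ_gen[OF assms(2)]) (use r in \<open>auto intro: cpf_power\<close>)
      then show ?thesis by (rule inJ_cong) (simp add: power_mult_distrib poly_power)
    qed
  qed auto
  then show ?thesis by (rule inJ_cong) (use r in simp)
qed

section \<open>Lagrange interpolation on grids\<close>

definition ell :: "complex set \<Rightarrow> complex \<Rightarrow> complex poly" where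
  "ell Z r = smult (inverse (\<Prod>r'\<in>Z-{r}. (r - r'))) (\<Prod>r'\<in>Z-{r}. [:- r', 1:])"

lemma ell_at:
  assumes "finite Z" "r \<in> Z" "r0 \<in> Z"
  shows "poly (ell Z r) r0 = (if r0 = r then 1 else 0)"
proof (cases "r0 = r")
  case True
  have "(\<Prod>r'\<in>Z-{r}. (r - r')) \<noteq> 0" using assms by (auto simp: prod_zero_iff)
  then show ?thesis using True by (simp add: ell_def poly_prod)
next
  case False
  then have "(\<Prod>r'\<in>Z-{r}. (r0 - r')) = 0" using assms by (auto simp: prod_zero_iff)
  then show ?thesis using False by (simp add: ell_def poly_prod)
qed

lemma ell_deg:
  assumes "finite Z" "r \<in> Z"
  shows "degree (ell Z r) \<le> card Z - 1"
proof -
  have "degree (ell Z r) \<le> degree (\<Prod>r'\<in>Z-{r}. [:- r', 1:])"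
    unfolding ell_def by (rule degree_smult_le)
  also have "\<dots> \<le> card (Z - {r})" by (rule cp_degree) (use assms in auto)
  also have "\<dots> = card Z - 1" using assms by simp
  finally show ?thesis .
qed

lemma ell_sum:
  assumes "finite Z" "Z \<noteq> {}"
  shows "(\<Sum>r\<in>Z. ell Z r) = 1"
proof (rule ccontr)
  let ?D = "(\<Sum>r\<in>Z. ell Z r) - 1"
  assume ne: "(\<Sum>r\<in>Z. ell Z r) \<noteq> 1"
  then have D0: "?D \<noteq> 0" by simp
  have "degree (\<Sum>r\<in>Z. ell Z r) \<le> card Z - 1"
    by (rule degree_sum_le) (use assms ell_deg in auto)
  then have dD: "degree ?D \<le> card Z - 1"
    using degree_diff_le[of "\<Sum>r\<in>Z. ell Z r" "card Z - 1" 1] by simp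
  have "Z \<subseteq> {x. poly ?D x = 0}"
  proof
    fix r0 assume r0: "r0 \<in> Z"
    have "poly (\<Sum>r\<in>Z. ell Z r) r0 = (\<Sum>r\<in>Z. if r0 = r then 1 else 0)"
      unfolding poly_sum using assms r0 by (intro sum.cong) (auto simp: ell_at)
    also have "\<dots> = 1" using assms r0 by simp
    finally show "r0 \<in> {x. poly ?D x = 0}" by simp
  qed
  then have "card Z \<le> card {x. poly ?D x = 0}" by (intro card_mono poly_roots_finite D0)
  also have "\<dots> \<le> degree ?D" by (rule card_poly_roots_bound[OF D0])
  finally show False using dD assms card_gt_0_iff[of Z] by linarith
qed

lemma ell_lin:
  assumes "finite Z" "r \<in> Z"
  shows "(\<Prod>r'\<in>Z. [:- r', 1:]) dvd ([:- r, 1:] * ell Z r)"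
proof -
  have "[:- r, 1:] * ell Z r = smult (inverse (\<Prod>r'\<in>Z-{r}. (r - r'))) ([:- r, 1:] * (\<Prod>r'\<in>Z-{r}. [:- r', 1:]))"
    by (simp add: ell_def)
  also have "[:- r, 1:] * (\<Prod>r'\<in>Z-{r}. [:- r', 1:]) = (\<Prod>r'\<in>Z. [:- r', 1:])"
    using prod.remove[OF assms, of "\<lambda>r'. [:- r', 1:]"] by simp
  finally have "[:- r, 1:] * ell Z r = smult (inverse (\<Prod>r'\<in>Z-{r}. (r - r'))) (\<Prod>r'\<in>Z. [:- r', 1:])" .
  then show ?thesis by (metis dvd_refl dvd_smult)
qed

definition Lam :: "('n \<Rightarrow> complex set) \<Rightarrow> complex^'n \<Rightarrow> complex^'n \<Rightarrow> complex" where
  "Lam Z s z = (\<Prod>j\<in>UNIV. poly (ell (Z j) (s $ j)) (z $ j))"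

definition grid :: "('n \<Rightarrow> complex set) \<Rightarrow> (complex^'n) set" where
  "grid Z = {s. \<forall>j. s $ j \<in> Z j}"

lemma Lam_cpf: "Lam Z s \<in> cpf"
  unfolding Lam_def by (intro cpf_prod cpf_uni) auto

lemma grid_bij: "bij_betw (\<lambda>s. vec_nth s) (grid Z) (PiE UNIV Z)"
proof (rule bij_betwI[where g="\<lambda>f. vec_lambda f"])
  show "vec_nth \<in> grid Z \<rightarrow> PiE UNIV Z" by (auto simp: grid_def)
  show "vec_lambda \<in> PiE UNIV Z \<rightarrow> grid Z" by (auto simp: grid_def)
qed auto

lemma grid_finite: "(\<And>j. finite (Z j)) \<Longrightarrow> finite (grid Z)"
  using bij_betw_finite[OF grid_bij[of Z]] by (simp add: finite_PiE)

lemma Lam_sum: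
  assumes "\<And>j. finite (Z j)" "\<And>j. Z j \<noteq> {}"
  shows "(\<Sum>s\<in>grid Z. Lam Z s z) = 1"
proof -
  have "(\<Sum>s\<in>grid Z. Lam Z s z) = (\<Sum>f\<in>PiE UNIV Z. \<Prod>j\<in>UNIV. poly (ell (Z j) (f j)) (z $ j))"
    unfolding Lam_def using sum.reindex_bij_betw[OF grid_bij[of Z], of "\<lambda>f. \<Prod>j\<in>UNIV. poly (ell (Z j) (f j)) (z $ j)"]
    by simp
  also have "\<dots> = (\<Prod>j\<in>UNIV. \<Sum>r\<in>Z j. poly (ell (Z j) r) (z $ j))"
    by (rule prod_sum_PiE[symmetric]) (use assms in auto)
  also have "\<dots> = 1" using ell_sum[OF assms] by (simp flip: poly_sum)
  finally show ?thesis .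
qed

lemma Lam_coord:
  assumes fin: "\<And>j. finite (Z j)" and s: "s \<in> grid Z"
  shows "inJ (\<lambda>j. \<Prod>r\<in>Z j. [:- r, 1:]) (\<lambda>z. z $ i * Lam Z s z - s $ i * Lam Z s z)"
proof -
  let ?q = "\<lambda>j. \<Prod>r\<in>Z j. [:- r, 1:]"
  let ?P = "\<lambda>z. \<Prod>j\<in>UNIV-{i}. poly (ell (Z j) (s $ j)) (z $ j)"
  have "inJ ?q (\<lambda>z. ?P z * poly ([:- s $ i, 1:] * ell (Z i) (s $ i)) (z $ i))"
    by (rule inJ_gen) (use ell_lin fin s in \<open>auto simp: grid_def intro!: cpf_prod cpf_uni\<close>)
  moreover have "z $ i * Lam Z s z - s $ i * Lam Z s z = ?P z * poly ([:- s $ i, 1:] * ell (Z i) (s $ i)) (z $ i)" for z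
  proof -
    have "Lam Z s z = poly (ell (Z i) (s $ i)) (z $ i) * ?P z"
      unfolding Lam_def by (rule prod.remove) auto
    then show ?thesis by (simp add: algebra_simps)
  qed
  ultimately show ?thesis by (rule inJ_cong)
qed

lemma Lam_red:
  assumes fin: "\<And>j. finite (Z j)" and s: "s \<in> grid Z" and P: "P \<in> cpf"
  shows "inJ (\<lambda>j. \<Prod>r\<in>Z j. [:- r, 1:]) (\<lambda>z. P z * Lam Z s z - P s * Lam Z s z)"
  using P
proof (induction rule: cpf.induct)
  case (cconst c) then show ?case by (simp add: inJ_zero)
next
  case (ccoord i) then show ?case by (rule Lam_coord[OF fin s])
next
  case (cadd F G)
  have "inJ (\<lambda>j. \<Prod>r\<in>Z j. [:- r, 1:]) (\<lambda>z. (F z * Lam Z s z - F s * Lam Z s z) + (G z * Lam Z s z - G s * Lam Z s z))"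
    by (rule inJ_add[OF cadd.IH])
  then show ?case by (rule inJ_cong) (simp add: algebra_simps)
next
  case (cmult F G)
  have "inJ (\<lambda>j. \<Prod>r\<in>Z j. [:- r, 1:]) (\<lambda>z. F z * (G z * Lam Z s z - G s * Lam Z s z) + G s * (F z * Lam Z s z - F s * Lam Z s z))"
    by (rule inJ_add[OF inJ_mult[OF cmult.IH(2) cmult.hyps(1)] inJ_mult[OF cmult.IH(1) cconst]])
  then show ?case by (rule inJ_cong) (simp add: algebra_simps)
qed

lemma vanish_inJ:
  assumes fin: "\<And>j. finite (Z j)" and ne: "\<And>j. Z j \<noteq> {}" and P: "P \<in> cpf"
    and van: "\<And>s. s \<in> grid Z \<Longrightarrow> P s = 0"
  shows "inJ (\<lambda>j. \<Prod>r\<in>Z j. [:- r, 1:]) P"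
proof -
  have "inJ (\<lambda>j. \<Prod>r\<in>Z j. [:- r, 1:]) (\<lambda>z. \<Sum>s\<in>grid Z. P z * Lam Z s z - P s * Lam Z s z)"
    by (rule inJ_sum) (use grid_finite[OF fin] Lam_red[OF fin _ P] in auto)
  moreover have "P z = (\<Sum>s\<in>grid Z. P z * Lam Z s z - P s * Lam Z s z)" for z
  proof -
    have "(\<Sum>s\<in>grid Z. P z * Lam Z s z - P s * Lam Z s z) = (\<Sum>s\<in>grid Z. P z * Lam Z s z)"
      using van by simp
    also have "\<dots> = P z * (\<Sum>s\<in>grid Z. Lam Z s z)" by (simp add: sum_distrib_left)
    also have "\<dots> = P z" using Lam_sum[OF fin ne, where z=z] by simp
    finally show ?thesis by simp
  qed
  ultimately show ?thesis by (rule inJ_cong)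
qed


definition repr :: "(real^'n \<Rightarrow> real) set \<Rightarrow> ((real^'n \<Rightarrow> real) \<Rightarrow> real) \<Rightarrow> complex^'n \<Rightarrow> bool" where
  "repr S \<phi> z \<longleftrightarrow> (\<forall>F\<in>cpf. RR F \<longrightarrow> ReF F \<in> S \<longrightarrow> complex_of_real (\<phi> (ReF F)) = F z)"

lemma ogrp_card: "ogrp G \<Longrightarrow> card G \<ge> 1"
  using ogrp_one ogrp_fin card_0_eq by (metis One_nat_def Suc_leI empty_iff neq0_conv)

lemma charE_inv:
  assumes G: "ogrp G" and that: "\<And>g. g \<in> G \<Longrightarrow> (\<lambda>x. a (g *v x)) \<in> poly_funs"
  shows "(\<lambda>x. coeff (\<Prod>g\<in>G. [:- a (g *v x), 1:]) k) \<in> inv_polys G"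
proof (rule inv_polysI[OF G])
  show "(\<lambda>x. coeff (\<Prod>g\<in>G. [:- a (g *v x), 1:]) k) \<in> poly_funs"
    by (rule pf_cp[of G "\<lambda>g x. a (g *v x)", simplified]) (use G ogrp_fin that in auto)
  fix \<sigma> x assume s: "\<sigma> \<in> G"
  have "(\<Prod>g\<in>G. [:- a (g *v (\<sigma> *v x)), 1:]) = (\<Prod>g\<in>G. (\<lambda>g. [:- a (g *v x), 1:]) (g ** \<sigma>))"
    by (simp add: matrix_vector_mul_assoc)
  also have "\<dots> = (\<Prod>g\<in>G. [:- a (g *v x), 1:])" by (rule cp_reindex[OF G s])
  finally show "coeff (\<Prod>g\<in>G. [:- a (g *v (\<sigma> *v x)), 1:]) k = coeff (\<Prod>g\<in>G. [:- a (g *v x), 1:]) k"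
    by simp
qed

lemma lift_exists:
  fixes G :: "(real^'n^'n) set" and \<phi> :: "(real^'n \<Rightarrow> real) \<Rightarrow> real"
  assumes G: "ogrp G" and hom: "ring_hom_on (inv_polys G) \<phi>"
  shows "\<exists>z. repr (inv_polys G) \<phi> z"
proof (rule ccontr)
  let ?A = "inv_polys G"
  have fr: "fring ?A" by (rule fring_inv[OF G])
  have finG: "finite G" using G by (rule ogrp_fin)
  assume "\<nexists>z. repr ?A \<phi> z"
  then have "\<forall>s. \<exists>F. F \<in> cpf \<and> RR F \<and> ReF F \<in> ?A \<and> complex_of_real (\<phi> (ReF F)) \<noteq> F s"
    unfolding repr_def by blast
  then obtain Fs where Fs: "\<And>s. Fs s \<in> cpf" "\<And>s. RR (Fs s)" "\<And>s. ReF (Fs s) \<in> ?A"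
    "\<And>s. complex_of_real (\<phi> (ReF (Fs s))) \<noteq> Fs s s" by metis
  define N where "N = card G"
  have N1: "N \<ge> 1" unfolding N_def by (rule ogrp_card[OF G])
  define E where "E j k = (\<lambda>x. coeff (\<Prod>g\<in>G. [:- (g *v x) $ j, 1:]) k)" for j k
  have E_A: "E j k \<in> ?A" for j k
    unfolding E_def using charE_inv[OF G, of "\<lambda>v. v $ j" k] pf_lin by blast
  have E_top: "E j N = (\<lambda>x. 1)" for j
  proof (rule ext)
    fix x show "E j N x = 1" unfolding E_def N_def using cp_top[OF finG, of "\<lambda>g. (g *v x) $ j"] by simp
  qed
  have E_id: "(\<Sum>k\<le>N. E j k x * (x $ j) ^ k) = 0" for j x
  proof -
    have "(\<Sum>k\<le>N. E j k x * (x $ j) ^ k) = poly (\<Prod>g\<in>G. [:- (g *v x) $ j, 1:]) (x $ j)"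
      unfolding E_def N_def by (rule cp_poly[OF finG, symmetric])
    also have "\<dots> = (\<Prod>g\<in>G. x $ j - (g *v x) $ j)" by (simp add: poly_prod)
    also have "\<dots> = 0" using ogrp_one[OF G] finG by (intro prod_zero) (auto intro!: bexI[of _ "mat 1"])
    finally show ?thesis .
  qed
  have phiE: "\<phi> (E j N) = 1" for j using E_top h_const[OF fr hom] by simp
  define pc where "pc j = (\<Sum>k\<le>N. monom (complex_of_real (\<phi> (E j k))) k)" for j
  have coeff_pc: "coeff (pc j) k = (if k \<le> N then complex_of_real (\<phi> (E j k)) else 0)" for j k
    unfolding pc_def by (simp add: coeff_sum)
  have deg_pc: "degree (pc j) = N" for j
  proof (rule antisym)
    show "degree (pc j) \<le> N" by (rule degree_le) (auto simp: coeff_pc)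
    show "N \<le> degree (pc j)" by (rule le_degree) (simp add: coeff_pc phiE)
  qed
  have lc_pc: "lead_coeff (pc j) = 1" for j by (simp add: deg_pc coeff_pc phiE)
  have pc_ne: "pc j \<noteq> 0" for j
  proof
    assume "pc j = 0" then have "lead_coeff (pc j) = 0" by simp
    with lc_pc[of j] show False by simp
  qed
  have poly_pc: "poly (pc j) (complex_of_real t) = complex_of_real (\<Sum>k\<le>N. \<phi> (E j k) * t ^ k)" for j t
    unfolding pc_def by (simp add: poly_sum poly_monom)
  define Z where "Z j = {r. poly (pc j) r = 0}" for j
  have finZ: "finite (Z j)" for j unfolding Z_def by (rule poly_roots_finite[OF pc_ne])
  have neZ: "Z j \<noteq> {}" for j
  proof -
    have "\<not> (\<exists>a l. a \<noteq> 0 \<and> l = 0 \<and> pc j = pCons a l)"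
      using deg_pc[of j] N1 by auto
    then obtain r where "poly (pc j) r = 0" using fundamental_theorem_of_algebra_alt by blast
    then show ?thesis unfolding Z_def by blast
  qed
  define q where "q j = (\<Prod>r\<in>Z j. [:- r, 1:])" for j
  have dvd: "pc j dvd q j ^ N" for j
  proof -
    have "pc j = smult (lead_coeff (pc j)) (\<Prod>z|poly (pc j) z = 0. [:-z, 1:] ^ order z (pc j))"
      by (rule complex_poly_decompose[symmetric])
    also have "\<dots> = (\<Prod>z\<in>Z j. [:-z, 1:] ^ order z (pc j))" by (simp add: lc_pc Z_def)
    finally have e: "pc j = (\<Prod>z\<in>Z j. [:-z, 1:] ^ order z (pc j))" .
    have "(\<Prod>z\<in>Z j. [:-z, 1:] ^ order z (pc j)) dvd (\<Prod>z\<in>Z j. [:-z, 1:] ^ N)"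
      by (rule prod_dvd_prod, rule le_imp_power_dvd) (metis order_degree[OF pc_ne] deg_pc)
    also have "\<dots> = q j ^ N" unfolding q_def by (simp add: prod_power_distrib)
    finally show ?thesis using e by simp
  qed
  define a where "a s = Re (Fs s s)" for s
  define b where "b s = Im (Fs s s)" for s
  define H where "H = (\<lambda>z. \<Prod>s\<in>grid Z. ((Fs s z - complex_of_real (a s))^2 + complex_of_real ((b s)^2)))"
  have H_cpf: "H \<in> cpf" unfolding H_def
    by (intro cpf_prod cadd cpf_power cpf_diff cconst Fs(1) grid_finite finZ)
  have H_van: "H s = 0" if "s \<in> grid Z" for s
  proof -
    have "(Fs s s - complex_of_real (a s))^2 + complex_of_real ((b s)^2) = 0"
      by (simp add: a_def b_def complex_eq_iff power2_eq_square)
    then show ?thesis unfolding H_def using that grid_finite[OF finZ] by (intro prod_zero) auto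
  qed
  define u where "u s = ReF (Fs s)" for s
  define hR where "hR = (\<lambda>x. \<Prod>s\<in>grid Z. ((u s x - a s)^2 + (b s)^2))"
  have hR_A: "hR \<in> ?A" unfolding hR_def u_def
    by (intro fr_prod[OF fr hom] fr_add[OF fr hom] fr_power[OF fr hom] fr_diff[OF fr hom] fr_const[OF fr hom] Fs(3) grid_finite finZ)
  have H_real: "H (cvec x) = complex_of_real (hR x)" for x
    unfolding H_def hR_def u_def using RR_eq[OF Fs(2)] by simp
  have phi_hR: "\<phi> hR = (\<Prod>s\<in>grid Z. ((\<phi> (u s) - a s)^2 + (b s)^2))"
    unfolding hR_def u_def
    by (simp add: h_prod[OF fr hom] h_add[OF fr hom] h_power[OF fr hom] h_diff[OF fr hom] h_const[OF fr hom]
        fr_add[OF fr hom] fr_power[OF fr hom] fr_diff[OF fr hom] fr_const[OF fr hom] Fs(3) grid_finite[OF finZ])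
  have phi_hR_ne: "\<phi> hR \<noteq> 0"
  proof -
    have nz: "(\<phi> (u s) - a s)^2 + (b s)^2 \<noteq> 0" for s
    proof
      assume "(\<phi> (u s) - a s)^2 + (b s)^2 = 0"
      then have "\<phi> (u s) = a s" "b s = 0" by (auto simp: sum_power2_eq_zero_iff)
      then have "complex_of_real (\<phi> (ReF (Fs s))) = Fs s s"
        by (simp add: u_def a_def b_def complex_eq_iff)
      then show False using Fs(4) by blast
    qed
    have fin: "finite (grid Z)" by (rule grid_finite[OF finZ])
    show ?thesis unfolding phi_hR prod_zero_iff[OF fin] using nz by blast
  qed
  have JH: "inJ q H" unfolding q_def by (rule vanish_inJ[OF finZ neZ H_cpf H_van])
  define K where "K = N * CARD('n)"
  have "inJ pc (\<lambda>z. H z ^ K)" unfolding K_def by (rule inJ_power[OF JH dvd])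
  then obtain r where r: "\<And>j. r j \<in> cpf" "\<And>z. H z ^ K = (\<Sum>j\<in>UNIV. r j z * poly (pc j) (z $ j))"
    unfolding inJ_def by blast
  define w where "w j k = (\<lambda>x. Re (r j (cvec x)) * (x $ j) ^ k)" for j k
  have w_pf: "w j k \<in> poly_funs" for j k
    unfolding w_def using cpf_Re_Im[OF r(1)] by (intro pf_mult pf_power pf_coord) auto
  have eq1: "hR x ^ K = (\<Sum>j\<in>UNIV. \<Sum>k\<le>N. (\<phi> (E j k) - E j k x) * w j k x)" for x
  proof -
    have "complex_of_real (hR x ^ K) = (\<Sum>j\<in>UNIV. r j (cvec x) * complex_of_real (\<Sum>k\<le>N. \<phi> (E j k) * (x $ j) ^ k))"
      using r(2)[of "cvec x"] H_real poly_pc by simp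
    then have "hR x ^ K = (\<Sum>j\<in>UNIV. Re (r j (cvec x)) * (\<Sum>k\<le>N. \<phi> (E j k) * (x $ j) ^ k))"
    proof -
      assume h: "complex_of_real (hR x ^ K) = (\<Sum>j\<in>UNIV. r j (cvec x) * complex_of_real (\<Sum>k\<le>N. \<phi> (E j k) * (x $ j) ^ k))"
      have "hR x ^ K = Re (complex_of_real (hR x ^ K))" by simp
      also have "\<dots> = Re (\<Sum>j\<in>UNIV. r j (cvec x) * complex_of_real (\<Sum>k\<le>N. \<phi> (E j k) * (x $ j) ^ k))"
        using h by simp
      also have "\<dots> = (\<Sum>j\<in>UNIV. Re (r j (cvec x)) * (\<Sum>k\<le>N. \<phi> (E j k) * (x $ j) ^ k))"
        by (simp add: Re_sum)
      finally show ?thesis .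
    qed
    also have "\<dots> = (\<Sum>j\<in>UNIV. Re (r j (cvec x)) * (\<Sum>k\<le>N. (\<phi> (E j k) - E j k x) * (x $ j) ^ k))"
    proof (rule sum.cong[OF refl])
      fix j
      have "(\<Sum>k\<le>N. (\<phi> (E j k) - E j k x) * (x $ j) ^ k) = (\<Sum>k\<le>N. \<phi> (E j k) * (x $ j) ^ k) - (\<Sum>k\<le>N. E j k x * (x $ j) ^ k)"
        by (simp add: algebra_simps sum_subtractf)
      then show "Re (r j (cvec x)) * (\<Sum>k\<le>N. \<phi> (E j k) * (x $ j) ^ k) = Re (r j (cvec x)) * (\<Sum>k\<le>N. (\<phi> (E j k) - E j k x) * (x $ j) ^ k)"
        using E_id[of j x] by simp
    qed
    also have "\<dots> = (\<Sum>j\<in>UNIV. \<Sum>k\<le>N. (\<phi> (E j k) - E j k x) * w j k x)"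
      unfolding w_def by (simp add: sum_distrib_left mult_ac)
    finally show ?thesis .
  qed
  define Rw where "Rw j k = (\<lambda>x. (\<Sum>g\<in>G. w j k (g *v x)) / real N)" for j k
  have Rw_A: "Rw j k \<in> ?A" for j k
  proof (rule inv_polysI[OF G])
    show "Rw j k \<in> poly_funs"
    proof -
      have "(\<lambda>x. (1 / real N) * (\<Sum>g\<in>G. w j k (g *v x))) \<in> poly_funs"
        by (intro pf_mult pf_const pf_sum finG pf_comp w_pf)
      then show ?thesis unfolding Rw_def by simp
    qed
    fix \<sigma> x assume s: "\<sigma> \<in> G"
    have "(\<Sum>g\<in>G. w j k (g *v (\<sigma> *v x))) = (\<Sum>g\<in>G. (\<lambda>g. w j k (g *v x)) (g ** \<sigma>))"
      by (simp add: matrix_vector_mul_assoc)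
    also have "\<dots> = (\<Sum>g\<in>G. w j k (g *v x))" by (rule sum_reindex_grp[OF G s])
    finally show "Rw j k (\<sigma> *v x) = Rw j k x" unfolding Rw_def by simp
  qed
  have eq2: "hR x ^ K = (\<Sum>j\<in>UNIV. \<Sum>k\<le>N. (\<phi> (E j k) - E j k x) * Rw j k x)" for x
  proof -
    have "hR x ^ K = (\<Sum>g\<in>G. hR (g *v x) ^ K) / real N"
      using inv_polysD[OF G hR_A] N1 unfolding N_def by simp
    also have "\<dots> = (\<Sum>g\<in>G. \<Sum>j\<in>UNIV. \<Sum>k\<le>N. (\<phi> (E j k) - E j k x) * w j k (g *v x)) / real N"
      using eq1 inv_polysD[OF G E_A] by simp
    also have "\<dots> = (\<Sum>j\<in>UNIV. \<Sum>k\<le>N. (\<phi> (E j k) - E j k x) * Rw j k x)"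
      unfolding Rw_def
      by (simp add: sum_divide_distrib sum_distrib_left sum.swap[of _ G] sum.swap[of _ G "{..N}"])
    finally show ?thesis .
  qed
  have mem: "(\<lambda>x. (\<phi> (E j k) - E j k x) * Rw j k x) \<in> ?A" for j k
    by (intro fr_mult[OF fr hom] fr_diff[OF fr hom] fr_const[OF fr hom] E_A Rw_A)
  have mem2: "(\<lambda>x. \<Sum>k\<le>N. (\<phi> (E j k) - E j k x) * Rw j k x) \<in> ?A" for j
    by (intro fr_sum[OF fr hom] mem) auto
  have "\<phi> (\<lambda>x. hR x ^ K) = \<phi> (\<lambda>x. \<Sum>j\<in>UNIV. \<Sum>k\<le>N. (\<phi> (E j k) - E j k x) * Rw j k x)"
    using eq2 by simp
  also have "\<dots> = (\<Sum>j\<in>UNIV. \<Sum>k\<le>N. \<phi> (\<lambda>x. (\<phi> (E j k) - E j k x) * Rw j k x))"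
    by (simp add: h_sum[OF fr hom] mem mem2)
  also have "\<dots> = 0"
    by (simp add: h_mult[OF fr hom] h_diff[OF fr hom] h_const[OF fr hom] fr_diff[OF fr hom] fr_const[OF fr hom] E_A Rw_A)
  finally have "\<phi> hR ^ K = 0" using h_power[OF fr hom hR_A] by simp
  then show False using phi_hR_ne by simp
qed


lemma cnjv_cvec [simp]: "cnjv (cvec x) = cvec x"
  by (simp add: vec_eq_iff)

lemma imv_cnjv: "imv (cnjv w) = - imv w"
  by (simp add: vec_eq_iff)

lemma cvec_mult: "cmat g *v cvec (s *v x) = cmat (g ** s) *v cvec x"
  by (simp add: cmat_cvec matrix_vector_mul_assoc)

lemma orth_tr_fix:
  assumes "orthogonal_matrix (g::real^'n^'n)" "g *v y = y"
  shows "(\<Sum>k\<in>UNIV. g $ k $ j * y $ k) = y $ j"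
proof -
  have "transpose g *v (g *v y) = y" using assms(1) by (simp add: matrix_vector_mul_assoc orth_tr_mul)
  then have "transpose g *v y = y" using assms(2) by simp
  then have "(transpose g *v y) $ j = y $ j" by simp
  then show ?thesis by (simp add: matrix_vector_mult_def transpose_def)
qed

lemma orth_tr_neg:
  assumes "orthogonal_matrix (g::real^'n^'n)" "g *v y = - y"
  shows "(\<Sum>k\<in>UNIV. g $ k $ j * y $ k) = - y $ j"
proof -
  have "transpose g *v (g *v y) = y" using assms(1) by (simp add: matrix_vector_mul_assoc orth_tr_mul)
  then have "transpose g *v (- y) = y" using assms(2) by simp
  then have "(transpose g *v (- y)) $ j = y $ j" by simp
  then show ?thesis by (simp add: matrix_vector_mult_def transpose_def sum_negf)
qed

lemma cpd_coord_minus: "cpd k (\<lambda>X. X $ j - c) X = (if j = k then 1 else 0)"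
  by (rule cpd_eqI) (auto simp: axis_def intro!: derivative_eq_intros)

lemma ReF_inv:
  assumes G: "ogrp G" and P: "P \<in> cpf"
  shows "ReF (\<lambda>X. \<Sum>g\<in>G. P (cmat g *v X)) \<in> inv_polys G"
proof (rule inv_polysI[OF G])
  show "ReF (\<lambda>X. \<Sum>g\<in>G. P (cmat g *v X)) \<in> poly_funs"
    by (intro ReF_pf cpf_sum cpf_comp P ogrp_fin[OF G])
  fix \<sigma> x assume s: "\<sigma> \<in> G"
  have "(\<Sum>g\<in>G. P (cmat g *v cvec (\<sigma> *v x))) = (\<Sum>g\<in>G. (\<lambda>g. P (cmat g *v cvec x)) (g ** \<sigma>))"
    by (simp add: cvec_mult)
  also have "\<dots> = (\<Sum>g\<in>G. P (cmat g *v cvec x))" by (rule sum_reindex_grp[OF G s])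
  finally have eq: "(\<Sum>g\<in>G. P (cmat g *v cvec (\<sigma> *v x))) = (\<Sum>g\<in>G. P (cmat g *v cvec x))" .
  show "ReF (\<lambda>X. \<Sum>g\<in>G. P (cmat g *v X)) (\<sigma> *v x) = ReF (\<lambda>X. \<Sum>g\<in>G. P (cmat g *v X)) x"
    by (simp only: ReF_def eq)
qed

lemma real_point:
  fixes G :: "(real^'n^'n) set" and \<phi> :: "(real^'n \<Rightarrow> real) \<Rightarrow> real"
  assumes G: "ogrp G" and hom: "ring_hom_on (inv_polys G) \<phi>"
    and pos: "\<forall>f\<in>inv_polys G. \<phi> (dd f) \<ge> 0" and rep: "repr (inv_polys G) \<phi> z"
  shows "imv z = 0"
proof (rule ccontr)
  define y where "y = imv z"
  assume "imv z \<noteq> 0"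
  then have y0: "y \<noteq> 0" by (simp add: y_def)
  have finG: "finite G" by (rule ogrp_fin[OF G])
  define W where "W = (\<lambda>g. cmat g *v z) ` G \<union> (\<lambda>g. cnjv (cmat g *v z)) ` G"
  have finW: "finite W" unfolding W_def using finG by simp
  have "\<exists>c. w $ c \<noteq> z $ c" if "w \<noteq> z" for w using that by (simp add: vec_eq_iff)
  then obtain c where c: "\<And>w. w \<noteq> z \<Longrightarrow> w $ c w \<noteq> z $ c w" by metis
  define L where "L = (\<lambda>X. \<Prod>w\<in>W-{z}. inverse (z $ c w - w $ c w) * (X $ c w - w $ c w))"
  have L_cpf: "L \<in> cpf" unfolding L_def
    by (intro cpf_prod cpf_cmul cpf_diff ccoord cconst) (use finW in auto)
  have Lz: "L z = 1" unfolding L_def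
  proof (intro prod.neutral ballI)
    fix w assume "w \<in> W - {z}"
    then have "z $ c w - w $ c w \<noteq> 0" using c[of w] by auto
    then show "inverse (z $ c w - w $ c w) * (z $ c w - w $ c w) = 1" by simp
  qed
  have Lw: "L w = 0" if "w \<in> W" "w \<noteq> z" for w
    unfolding L_def using that finW by (intro prod_zero) (auto intro!: bexI[of _ w])
  define M where "M = (\<lambda>X. \<Sum>j\<in>UNIV. \<i> * complex_of_real (y $ j) * (X $ j - z $ j))"
  have M_cpf: "M \<in> cpf" unfolding M_def by (intro cpf_sum cpf_cmul cpf_diff ccoord cconst) auto
  have Mz: "M z = 0" unfolding M_def by simp
  have dM: "cpd k M X = \<i> * complex_of_real (y $ k)" for k X
  proof -
    have "cpd k M X = (\<Sum>j\<in>UNIV. cpd k (\<lambda>X. \<i> * complex_of_real (y $ j) * (X $ j - z $ j)) X)"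
      unfolding M_def by (rule cpd_sum) (auto intro!: cpf_cmul cpf_diff ccoord cconst)
    also have "\<dots> = (\<Sum>j\<in>UNIV. if j = k then \<i> * complex_of_real (y $ j) else 0)"
    proof (rule sum.cong[OF refl])
      fix j
      have "cpd k (\<lambda>X. \<i> * complex_of_real (y $ j) * (X $ j - z $ j)) X =
          \<i> * complex_of_real (y $ j) * cpd k (\<lambda>X. X $ j - z $ j) X"
        using cpd_cmul[of "\<lambda>X. X $ j - z $ j" k "\<i> * complex_of_real (y $ j)" X]
        by (simp add: cpf_diff ccoord cconst mult.assoc)
      also have "\<dots> = (if j = k then \<i> * complex_of_real (y $ j) else 0)"
        by (simp add: cpd_coord_minus)
      finally show "cpd k (\<lambda>X. \<i> * complex_of_real (y $ j) * (X $ j - z $ j)) X = (if j = k then \<i> * complex_of_real (y $ j) else 0)" .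
    qed
    also have "\<dots> = \<i> * complex_of_real (y $ k)" by simp
    finally show ?thesis .
  qed
  define Q where "Q = (\<lambda>X. L X * (L X * M X))"
  have Q_cpf: "Q \<in> cpf" unfolding Q_def by (intro cmult L_cpf M_cpf)
  have dQ: "cpd k Q X = cpd k L X * (L X * M X) + L X * (cpd k L X * M X + L X * cpd k M X)" for k X
    unfolding Q_def by (simp add: cpd_mult cmult L_cpf M_cpf)
  have dQW: "cpd k Q w = (if w = z then \<i> * complex_of_real (y $ k) else 0)" if "w \<in> W" for k w
  proof (cases "w = z")
    case True then show ?thesis by (simp add: dQ Lz Mz dM)
  next
    case False then show ?thesis using Lw[OF that False] by (simp add: dQ)
  qed
  define P where "P = (\<lambda>X. Q X + cnj (Q (cnjv X)))"
  have P_cpf: "P \<in> cpf" unfolding P_def by (intro cadd Q_cpf cpf_cnj)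
  have dP: "cpd k P w = cpd k Q w + cnj (cpd k Q (cnjv w))" for k w
    unfolding P_def by (simp add: cpd_add Q_cpf cpf_cnj cpd_cnj)
  define F where "F = (\<lambda>X. \<Sum>g\<in>G. P (cmat g *v X))"
  have F_cpf: "F \<in> cpf" unfolding F_def by (intro cpf_sum cpf_comp P_cpf finG)
  have F_RR: "RR F" unfolding RR_def F_def P_def by (simp add: cmat_cvec)
  have F_A: "ReF F \<in> inv_polys G" unfolding F_def by (rule ReF_inv[OF G P_cpf])
  have dd_A: "dd (ReF F) \<in> inv_polys G" by (rule dd_inv[OF G F_A])
  have ddeq: "dd (ReF F) = ReF (DD F)" by (rule dd_ReF[OF F_cpf F_RR])
  have rep1: "complex_of_real (\<phi> (dd (ReF F))) = DD F z"
    using rep DD_cpf[OF F_cpf] DD_RR[OF F_cpf F_RR] dd_A unfolding repr_def ddeq by blast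
  define cg where "cg g = (if cmat g *v z = z then 1 else 0) + (if cnjv (cmat g *v z) = z then 1 else (0::real))" for g
  have zz: "cnjv z \<noteq> z"
  proof
    assume "cnjv z = z"
    then have "imv (cnjv z) = imv z" by simp
    then have "y = - y" using imv_cnjv[of z] by (simp add: y_def)
    then show False using y0 by (auto simp: vec_eq_iff)
  qed
  have contrib: "(\<Sum>k\<in>UNIV. complex_of_real (g $ k $ j) * cpd k P (cmat g *v z)) = \<i> * complex_of_real (y $ j * cg g)"
    if g: "g \<in> G" for g j
  proof -
    let ?w = "cmat g *v z"
    have wW: "?w \<in> W" "cnjv ?w \<in> W" unfolding W_def using g by auto
    have og: "orthogonal_matrix g" using ogrp_orth[OF G g] .
    have dPw: "cpd k P ?w = (if ?w = z then \<i> * complex_of_real (y $ k) else 0) + (if cnjv ?w = z then - \<i> * complex_of_real (y $ k) else 0)" for k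
      unfolding dP using dQW[OF wW(1)] dQW[OF wW(2)] by simp
    show ?thesis
    proof (cases "?w = z")
      case True
      then have nc: "cnjv ?w \<noteq> z" using zz by simp
      have "g *v y = y" using True imv_cmat[of g z] by (simp add: y_def)
      then have s: "(\<Sum>k\<in>UNIV. g $ k $ j * y $ k) = y $ j" by (rule orth_tr_fix[OF og])
      have e: "cpd k P ?w = \<i> * complex_of_real (y $ k)" for k using dPw[of k] True nc by simp
      have "(\<Sum>k\<in>UNIV. complex_of_real (g $ k $ j) * cpd k P ?w) = \<i> * complex_of_real (\<Sum>k\<in>UNIV. g $ k $ j * y $ k)"
        unfolding e by (simp add: sum_distrib_left mult_ac)
      then show ?thesis using True nc s by (simp add: cg_def)
    next
      case False
      show ?thesis
      proof (cases "cnjv ?w = z")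
        case True
        have "imv (cnjv ?w) = y" using True by (simp add: y_def)
        then have "g *v y = - y" using imv_cnjv[of ?w] imv_cmat[of g z] unfolding y_def by (metis minus_minus)
        then have s: "(\<Sum>k\<in>UNIV. g $ k $ j * y $ k) = - y $ j" by (rule orth_tr_neg[OF og])
        have e: "cpd k P ?w = - \<i> * complex_of_real (y $ k)" for k using dPw[of k] True False by simp
        have "(\<Sum>k\<in>UNIV. complex_of_real (g $ k $ j) * cpd k P ?w) = - \<i> * complex_of_real (\<Sum>k\<in>UNIV. g $ k $ j * y $ k)"
          unfolding e by (simp add: sum_distrib_left mult_ac)
        then show ?thesis using True False s by (simp add: cg_def)
      next
        case False2: False
        then show ?thesis using False by (simp add: dPw cg_def)
      qed
    qed
  qed
  define C where "C = (\<Sum>g\<in>G. cg g)"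
  have C1: "C \<ge> 1"
  proof -
    have "cg (mat 1) \<ge> 1" by (simp add: cg_def cmat_one)
    moreover have "cg g \<ge> 0" for g by (simp add: cg_def)
    ultimately have "cg (mat 1) \<le> C" unfolding C_def using ogrp_one[OF G] finG
      by (intro member_le_sum) auto
    then show ?thesis using \<open>cg (mat 1) \<ge> 1\<close> by simp
  qed
  have dF: "cpd j F z = \<i> * complex_of_real (y $ j * C)" for j
  proof -
    have "cpd j F z = (\<Sum>g\<in>G. cpd j (\<lambda>X. P (cmat g *v X)) z)"
      unfolding F_def by (rule cpd_sum) (auto intro: cpf_comp P_cpf finG)
    also have "\<dots> = (\<Sum>g\<in>G. \<i> * complex_of_real (y $ j * cg g))"
      by (rule sum.cong[OF refl]) (simp add: cpd_comp[OF P_cpf] contrib)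
    also have "\<dots> = \<i> * complex_of_real (y $ j * C)"
      by (simp add: C_def sum_distrib_left)
    finally show ?thesis .
  qed
  have "DD F z = complex_of_real (- (C^2 * (\<Sum>j\<in>UNIV. (y $ j)^2)))"
  proof -
    have sq: "(\<i> * complex_of_real (y $ j * C))^2 = complex_of_real (- (C^2 * (y $ j)^2))" for j
      by (simp add: power_mult_distrib algebra_simps)
    have "DD F z = (\<Sum>j\<in>UNIV. complex_of_real (- (C^2 * (y $ j)^2)))"
      unfolding DD_def dF sq by simp
    also have "\<dots> = complex_of_real (- (C^2 * (\<Sum>j\<in>UNIV. (y $ j)^2)))"
      by (simp only: of_real_sum[symmetric] sum_negf sum_distrib_left)
    finally show ?thesis .
  qed
  then have "complex_of_real (\<phi> (dd (ReF F))) = complex_of_real (- (C^2 * (\<Sum>j\<in>UNIV. (y $ j)^2)))"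
    using rep1 by (rule trans[rotated])
  then have phival: "\<phi> (dd (ReF F)) = - (C^2 * (\<Sum>j\<in>UNIV. (y $ j)^2))" by (simp only: of_real_eq_iff)
  have "(\<Sum>j\<in>UNIV. (y $ j)^2) > 0"
  proof -
    obtain j where "y $ j \<noteq> 0" using y0 by (auto simp: vec_eq_iff)
    then have "(y $ j)^2 > 0" by simp
    moreover have "(y $ j)^2 \<le> (\<Sum>j\<in>UNIV. (y $ j)^2)" by (intro member_le_sum) auto
    ultimately show ?thesis by linarith
  qed
  then have "\<phi> (dd (ReF F)) < 0" unfolding phival using C1 by (simp add: mult_pos_pos)
  then show False using pos dd_A F_A by fastforce
qed


lemma prod_trick:
  fixes G H :: "(real^'n^'n) set" and \<phi> \<phi>H :: "(real^'n \<Rightarrow> real) \<Rightarrow> real"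
  assumes G: "ogrp G" and H: "ogrp H" and sub: "H \<subseteq> G"
    and homG: "ring_hom_on (inv_polys G) \<phi>" and homH: "ring_hom_on (inv_polys H) \<phi>H"
    and ext: "\<forall>f\<in>inv_polys G. \<phi>H f = \<phi> f" and rep: "repr (inv_polys G) \<phi> z"
  shows "\<exists>g\<in>G. repr (inv_polys H) \<phi>H (cmat g *v z)"
proof (rule ccontr)
  let ?A = "inv_polys G" and ?B = "inv_polys H"
  have frA: "fring ?A" by (rule fring_inv[OF G])
  have frB: "fring ?B" by (rule fring_inv[OF H])
  have finG: "finite G" by (rule ogrp_fin[OF G])
  have AB: "?A \<subseteq> ?B" using sub by (auto simp: inv_polys_alt[OF G] inv_polys_alt[OF H])
  assume "\<not> (\<exists>g\<in>G. repr ?B \<phi>H (cmat g *v z))"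
  then have "\<forall>g\<in>G. \<exists>F. F \<in> cpf \<and> RR F \<and> ReF F \<in> ?B \<and> complex_of_real (\<phi>H (ReF F)) \<noteq> F (cmat g *v z)"
    unfolding repr_def by blast
  then obtain Fs where Fs: "\<And>g. g \<in> G \<Longrightarrow> Fs g \<in> cpf" "\<And>g. g \<in> G \<Longrightarrow> RR (Fs g)"
    "\<And>g. g \<in> G \<Longrightarrow> ReF (Fs g) \<in> ?B"
    "\<And>g. g \<in> G \<Longrightarrow> complex_of_real (\<phi>H (ReF (Fs g))) \<noteq> Fs g (cmat g *v z)" by metis
  define a where "a g = Re (Fs g (cmat g *v z))" for g
  define b where "b g = Im (Fs g (cmat g *v z))" for g
  define Hh where "Hh = (\<lambda>X. \<Prod>g\<in>G. ((Fs g X - complex_of_real (a g))^2 + complex_of_real ((b g)^2)))"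
  have Hh_cpf: "Hh \<in> cpf" unfolding Hh_def
    by (intro cpf_prod cadd cpf_power cpf_diff cconst Fs(1) finG)
  have Hh_van: "Hh (cmat g' *v z) = 0" if "g' \<in> G" for g'
  proof -
    have "(Fs g' (cmat g' *v z) - complex_of_real (a g'))^2 + complex_of_real ((b g')^2) = 0"
      by (simp add: a_def b_def complex_eq_iff power2_eq_square)
    then show ?thesis unfolding Hh_def using that finG by (intro prod_zero) auto
  qed
  define u where "u g = ReF (Fs g)" for g
  define hh where "hh = (\<lambda>x. \<Prod>g\<in>G. ((u g x - a g)^2 + (b g)^2))"
  have hh_B: "hh \<in> ?B" unfolding hh_def u_def
    by (intro fr_prod[OF frB homH] fr_add[OF frB homH] fr_power[OF frB homH] fr_diff[OF frB homH]
        fr_const[OF frB homH] Fs(3) finG)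
  have Hh_real: "Hh (cvec x) = complex_of_real (hh x)" for x
    unfolding Hh_def hh_def u_def using RR_eq[OF Fs(2)] by simp
  have phi_hh: "\<phi>H hh = (\<Prod>g\<in>G. ((\<phi>H (u g) - a g)^2 + (b g)^2))"
    unfolding hh_def u_def
    by (simp add: h_prod[OF frB homH] h_add[OF frB homH] h_power[OF frB homH] h_diff[OF frB homH]
        h_const[OF frB homH] fr_add[OF frB homH] fr_power[OF frB homH] fr_diff[OF frB homH]
        fr_const[OF frB homH] Fs(3) finG)
  have phi_hh_ne: "\<phi>H hh \<noteq> 0"
  proof -
    have nz: "(\<phi>H (u g) - a g)^2 + (b g)^2 \<noteq> 0" if "g \<in> G" for g
    proof
      assume "(\<phi>H (u g) - a g)^2 + (b g)^2 = 0"
      then have "\<phi>H (u g) = a g" "b g = 0" by (auto simp: sum_power2_eq_zero_iff)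
      then have "complex_of_real (\<phi>H (ReF (Fs g))) = Fs g (cmat g *v z)"
        by (simp add: u_def a_def b_def complex_eq_iff)
      then show False using Fs(4)[OF that] by blast
    qed
    show ?thesis unfolding phi_hh prod_zero_iff[OF finG] using nz by blast
  qed
  define N where "N = card G"
  define c where "c k = (\<lambda>x. coeff (\<Prod>g\<in>G. [:- hh (g *v x), 1:]) k)" for k
  have c_A: "c k \<in> ?A" for k
    unfolding c_def by (rule charE_inv[OF G]) (intro pf_comp inv_polys_pf[OF hh_B])
  define C where "C k = (\<lambda>X. coeff (\<Prod>g\<in>G. [:- Hh (cmat g *v X), 1:]) k)" for k
  have C_cpf: "C k \<in> cpf" for k
    unfolding C_def by (rule cpf_cp[OF finG]) (intro cpf_comp Hh_cpf)
  have C_real: "C k (cvec x) = complex_of_real (c k x)" for k x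
    unfolding C_def c_def by (simp add: cmat_cvec Hh_real cp_of_real[OF finG])
  have C_RR: "RR (C k)" for k using C_real by (simp add: RR_def)
  have C_ReF: "ReF (C k) = c k" for k using C_real by (auto simp: ReF_def)
  have phic: "complex_of_real (\<phi> (c k)) = C k z" for k
    using rep C_cpf C_RR C_ReF c_A unfolding repr_def by metis
  have id: "(\<Sum>k\<le>N. c k x * hh x ^ k) = 0" for x
  proof -
    have "(\<Sum>k\<le>N. c k x * hh x ^ k) = poly (\<Prod>g\<in>G. [:- hh (g *v x), 1:]) (hh x)"
      unfolding c_def N_def by (rule cp_poly[OF finG, symmetric])
    also have "\<dots> = (\<Prod>g\<in>G. hh x - hh (g *v x))" by (simp add: poly_prod)
    also have "\<dots> = 0" using ogrp_one[OF G] finG by (intro prod_zero) (auto intro!: bexI[of _ "mat 1"])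
    finally show ?thesis .
  qed
  have memk: "(\<lambda>x. c k x * hh x ^ k) \<in> ?B" for k
    using AB c_A hh_B by (intro fr_mult[OF frB homH] fr_power[OF frB homH]) auto
  have "0 = \<phi>H (\<lambda>x. \<Sum>k\<le>N. c k x * hh x ^ k)"
    using id h_zero[OF frB homH] by simp
  also have "\<dots> = (\<Sum>k\<le>N. \<phi>H (c k) * \<phi>H hh ^ k)"
    using AB c_A hh_B memk
    by (simp add: h_sum[OF frB homH] h_mult[OF frB homH] fr_power[OF frB homH] h_power[OF frB homH] subsetD)
  also have "\<dots> = (\<Sum>k\<le>N. \<phi> (c k) * \<phi>H hh ^ k)"
    using ext c_A by simp
  finally have e0: "(\<Sum>k\<le>N. \<phi> (c k) * \<phi>H hh ^ k) = 0" by simp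
  have "complex_of_real (\<Sum>k\<le>N. \<phi> (c k) * \<phi>H hh ^ k) = (\<Sum>k\<le>N. C k z * complex_of_real (\<phi>H hh) ^ k)"
    by (simp add: phic[symmetric])
  also have "\<dots> = poly (\<Prod>g\<in>G. [:- Hh (cmat g *v z), 1:]) (complex_of_real (\<phi>H hh))"
    unfolding C_def N_def by (rule cp_poly[OF finG, symmetric])
  also have "\<dots> = (\<Prod>g\<in>G. complex_of_real (\<phi>H hh))"
    by (simp add: poly_prod Hh_van)
  finally have "(\<Prod>g\<in>G. complex_of_real (\<phi>H hh)) = 0" using e0 by simp
  then show False using phi_hh_ne finG by simp
qed

theorem proposition2p8:
  fixes G H :: "(real^'n^'n) set"
    and \<phi> \<phi>H :: "(real^'n \<Rightarrow> real) \<Rightarrow> real"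
  assumes "finite_orth_group G"
    and "matrix_subgroup H G"
    and "ring_hom_on (inv_polys G) \<phi>"
    and "\<forall>f\<in>inv_polys G. \<phi> (dd f) \<ge> 0"
    and "ring_hom_on (inv_polys H) \<phi>H"
    and "\<forall>f\<in>inv_polys G. \<phi>H f = \<phi> f"
  shows "\<forall>f\<in>inv_polys H. \<phi>H (dd f) \<ge> 0"
proof
  fix f assume f: "f \<in> inv_polys H"
  have G: "ogrp G" by (rule ogrp_G[OF assms(1)])
  have H: "ogrp H" by (rule ogrp_H[OF assms(1,2)])
  have sub: "H \<subseteq> G" using assms(2) by (simp add: matrix_subgroup_def)
  obtain z where z: "repr (inv_polys G) \<phi> z" using lift_exists[OF G assms(3)] by blast
  have zr: "imv z = 0" by (rule real_point[OF G assms(3) assms(4) z])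
  obtain g where g: "g \<in> G" "repr (inv_polys H) \<phi>H (cmat g *v z)"
    using prod_trick[OF G H sub assms(3) assms(5) assms(6) z] by blast
  define w where "w = cmat g *v z"
  have wr: "imv w = 0" unfolding w_def by (simp add: imv_cmat zr)
  define x0 where "x0 = (\<chi> j. Re (w $ j))"
  have wx: "w = cvec x0"
    using wr by (simp add: vec_eq_iff x0_def complex_eq_iff)
  have ddB: "dd f \<in> inv_polys H" by (rule dd_inv[OF H f])
  obtain F where F: "F \<in> cpf" "RR F" "ReF F = dd f" "\<And>x. F (cvec x) = complex_of_real (dd f x)"
    using pf_ext'[OF inv_polys_pf[OF ddB]] by blast
  have "complex_of_real (\<phi>H (dd f)) = F w"
    using g(2) F ddB unfolding repr_def w_def by metis
  then have "\<phi>H (dd f) = dd f x0" using F(4) wx by simp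
  also have "\<dots> \<ge> 0" unfolding dd_def by (intro sum_nonneg) auto
  finally show "\<phi>H (dd f) \<ge> 0" .
qed

end
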